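(* Let $p$ be an odd prime, $\zeta$ a primitive $p$-th root of unity, $K=\mathbf{Q}_p(\zeta)$, $K^+=\mathbf{Q}_p(\zeta+\zeta^{-1})$, $\mathfrak{o}=\mathbf{Z}_p[\zeta]$, $\pi=1-\zeta$, and regard $\mathbf{Z}[\zeta]\subset\mathfrak{o}$ via $\zeta\mapsto\zeta$. Let $u\in\mathbf{Z}[\zeta]^\times$ be a global unit such that $u\equiv a\pmod{\pi^2}$ and $N_{K|K^+}(u)\equiv b\pmod{p}$ for some $a,b\in\mathbf{Z}_p^\times$. Then $u\in\mathfrak{o}^{\times p}$. *)

theory Defs
  imports "HOL-Computational_Algebra.Polynomial" "HOL-Number_Theory.Cong"
begin

text \<open>Z[zeta] is modelled as Z[X]/(Phi_p), Phi_p = 1 + X + ... + X^(p-1) the p-th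
cyclotomic polynomial (p prime); an element is represented by an integer polynomial.\<close>

definition cyclo :: "nat \<Rightarrow> int poly" where
  "cyclo p = (\<Sum>i<p. monom 1 i)"

text \<open>Congruence in Z[zeta] modulo the ideal generated by the integer m,
i.e. equality in Z[X]/(Phi_p, m).  For m = 0 this is equality in Z[zeta].\<close>
definition zcong :: "nat \<Rightarrow> int \<Rightarrow> int poly \<Rightarrow> int poly \<Rightarrow> bool" where
  "zcong p m f g \<longleftrightarrow> (\<exists>q r. f - g = q * cyclo p + smult m r)"

definition zeq :: "nat \<Rightarrow> int poly \<Rightarrow> int poly \<Rightarrow> bool" where
  "zeq p f g \<longleftrightarrow> zcong p 0 f g"

definition zunit :: "nat \<Rightarrow> int poly \<Rightarrow> bool" where
  "zunit p u \<longleftrightarrow> (\<exists>v. zeq p (u * v) 1)"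

definition piz :: "int poly" where
  "piz = [:1, -1:]"

text \<open>Complex conjugation zeta |-> zeta^(-1) = zeta^(p-1), and the norm N_{K|K+}.\<close>
definition conjz :: "nat \<Rightarrow> int poly \<Rightarrow> int poly" where
  "conjz p u = pcompose u (monom 1 (p - 1))"

definition normz :: "nat \<Rightarrow> int poly \<Rightarrow> int poly" where
  "normz p u = u * conjz p u"

text \<open>Z_p as the inverse limit of Z/p^n: compatible sequences, a n read mod p^n.\<close>
definition Zp_elem :: "nat \<Rightarrow> (nat \<Rightarrow> int) \<Rightarrow> bool" where
  "Zp_elem p a \<longleftrightarrow> (\<forall>n. [a (Suc n) = a n] (mod (int p ^ n)))"

definition Zp_unit :: "nat \<Rightarrow> (nat \<Rightarrow> int) \<Rightarrow> bool" where
  "Zp_unit p a \<longleftrightarrow> Zp_elem p a \<and> (\<exists>b. Zp_elem p b \<and> (\<forall>n. [a n * b n = 1] (mod (int p ^ n))))"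

text \<open>o = Z_p[zeta] as the inverse limit of Z[zeta]/p^n: compatible sequences,
x n read in Z[zeta]/(p^n).  Ring operations are componentwise; Z[zeta] embeds
via constant sequences, Z_p via constant polynomials.\<close>
definition o_elem :: "nat \<Rightarrow> (nat \<Rightarrow> int poly) \<Rightarrow> bool" where
  "o_elem p x \<longleftrightarrow> (\<forall>n. zcong p (int p ^ n) (x (Suc n)) (x n))"

definition o_eq :: "nat \<Rightarrow> (nat \<Rightarrow> int poly) \<Rightarrow> (nat \<Rightarrow> int poly) \<Rightarrow> bool" where
  "o_eq p x y \<longleftrightarrow> (\<forall>n. zcong p (int p ^ n) (x n) (y n))"

definition o_unit :: "nat \<Rightarrow> (nat \<Rightarrow> int poly) \<Rightarrow> bool" where
  "o_unit p x \<longleftrightarrow> o_elem p x \<and> (\<exists>z. o_elem p z \<and> o_eq p (\<lambda>n. x n * z n) (\<lambda>n. 1))"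

definition o_cong :: "nat \<Rightarrow> int poly \<Rightarrow> (nat \<Rightarrow> int poly) \<Rightarrow> (nat \<Rightarrow> int poly) \<Rightarrow> bool" where
  "o_cong p d x y \<longleftrightarrow> (\<exists>z. o_elem p z \<and> o_eq p (\<lambda>n. x n - y n) (\<lambda>n. d * z n))"

definition o_pth_power_unit :: "nat \<Rightarrow> (nat \<Rightarrow> int poly) \<Rightarrow> bool" where
  "o_pth_power_unit p x \<longleftrightarrow> (\<exists>y. o_unit p y \<and> o_eq p (\<lambda>n. y n ^ p) x)"

end

theory Submission
  imports Defs
begin

definition ev :: "complex \<Rightarrow> int poly \<Rightarrow> complex" where
  "ev z f = poly (map_poly of_int f) z"

lemma ev_0[simp]: "ev z 0 = 0" by (simp add: ev_def)
lemma ev_pCons[simp]: "ev z (pCons a f) = of_int a + z * ev z f"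
  by (simp add: ev_def map_poly_pCons)
lemma ev_const[simp]: "ev z [:a:] = of_int a"
  by simp
lemma ev_1[simp]: "ev z 1 = 1"
  by (simp add: one_pCons)
lemma ev_add[simp]: "ev z (f + g) = ev z f + ev z g"
  by (induction f g rule: poly_induct2) (auto simp: algebra_simps)
lemma ev_uminus[simp]: "ev z (- f) = - ev z f"
  by (induction f) (auto simp: algebra_simps)
lemma ev_diff[simp]: "ev z (f - g) = ev z f - ev z g"
  using ev_add[of z f "-g"] by simp
lemma ev_smult[simp]: "ev z (smult a f) = of_int a * ev z f"
  by (induction f) (auto simp: algebra_simps)
lemma ev_mult[simp]: "ev z (f * g) = ev z f * ev z g"
  by (induction f) (auto simp: algebra_simps mult_pCons_left)
lemma ev_power[simp]: "ev z (f ^ n) = ev z f ^ n"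
  by (induction n) auto
lemma ev_sum: "ev z (sum f A) = (\<Sum>i\<in>A. ev z (f i))"
  by (induction A rule: infinite_finite_induct) auto
lemma ev_prod: "ev z (prod f A) = (\<Prod>i\<in>A. ev z (f i))"
  by (induction A rule: infinite_finite_induct) auto
lemma ev_monom[simp]: "ev z (monom a n) = of_int a * z ^ n"
  by (simp add: ev_def map_poly_monom poly_monom)
lemma ev_of_nat[simp]: "ev z (of_nat n) = of_nat n"
  by (induction n) auto
lemma ev_of_int[simp]: "ev z (of_int n) = of_int n"
  by (simp add: of_int_poly)
lemma ev_pcompose: "ev z (pcompose f g) = ev (ev z g) f"
  by (induction f) (auto simp: pcompose_pCons)
lemma ev_cnj: "cnj (ev z f) = ev (cnj z) f"
  by (induction f) auto


definition mc :: "nat \<Rightarrow> int poly \<Rightarrow> int poly \<Rightarrow> int poly \<Rightarrow> bool" where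
  "mc p d x y \<longleftrightarrow> (\<exists>c q. x - y = d * c + q * cyclo p)"

lemma mc_refl[simp]: "mc p d x x" unfolding mc_def by (rule exI[of _ 0], rule exI[of _ 0]) simp
lemma mc_sym: "mc p d x y \<Longrightarrow> mc p d y x"
proof -
  assume "mc p d x y"
  then obtain c q where "x - y = d*c + q*cyclo p" unfolding mc_def by blast
  then have "y - x = d*(-c) + (-q)*cyclo p" by (simp add: algebra_simps)
  then show ?thesis unfolding mc_def by blast
qed
lemma mc_trans: "mc p d x y \<Longrightarrow> mc p d y z \<Longrightarrow> mc p d x z"
proof -
  assume "mc p d x y" "mc p d y z"
  then obtain c q c' q' where "x - y = d*c + q*cyclo p" "y - z = d*c' + q'*cyclo p" unfolding mc_def by blast
  then have "x - z = d*(c+c') + (q+q')*cyclo p" by (simp add: algebra_simps)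
  then show ?thesis unfolding mc_def by blast
qed
lemma mc_add: "mc p d x y \<Longrightarrow> mc p d x' y' \<Longrightarrow> mc p d (x + x') (y + y')"
proof -
  assume "mc p d x y" "mc p d x' y'"
  then obtain c q c' q' where "x - y = d*c + q*cyclo p" "x' - y' = d*c' + q'*cyclo p" unfolding mc_def by blast
  then have "(x + x') - (y + y') = d*(c+c') + (q+q')*cyclo p" by (simp add: algebra_simps)
  then show ?thesis unfolding mc_def by blast
qed
lemma mc_uminus: "mc p d x y \<Longrightarrow> mc p d (-x) (-y)"
proof -
  assume "mc p d x y"
  then obtain c q where "x - y = d*c + q*cyclo p" unfolding mc_def by blast
  then have "(-x) - (-y) = d*(-c) + (-q)*cyclo p" by (simp add: algebra_simps)
  then show ?thesis unfolding mc_def by blast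
qed
lemma mc_diff: "mc p d x y \<Longrightarrow> mc p d x' y' \<Longrightarrow> mc p d (x - x') (y - y')"
  using mc_add[of p d x y "-x'" "-y'"] mc_uminus by simp
lemma mc_mult_left: "mc p d x y \<Longrightarrow> mc p d (z * x) (z * y)"
proof -
  assume "mc p d x y"
  then obtain c q where "x - y = d*c + q*cyclo p" unfolding mc_def by blast
  then have "z*x - z*y = d*(z*c) + (z*q)*cyclo p" by (simp add: algebra_simps flip: right_diff_distrib)
  then show ?thesis unfolding mc_def by blast
qed
lemma mc_mult: "mc p d x y \<Longrightarrow> mc p d x' y' \<Longrightarrow> mc p d (x * x') (y * y')"
  by (metis mc_mult_left mc_trans mult.commute)
lemma mc_power: "mc p d x y \<Longrightarrow> mc p d (x ^ n) (y ^ n)"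
  by (induction n) (auto intro: mc_mult)
lemma mc_prod: "(\<And>i. i \<in> A \<Longrightarrow> mc p d (f i) (g i)) \<Longrightarrow> mc p d (prod f A) (prod g A)"
  by (induction A rule: infinite_finite_induct) (auto intro: mc_mult)
lemma mc_sum: "(\<And>i. i \<in> A \<Longrightarrow> mc p d (f i) (g i)) \<Longrightarrow> mc p d (sum f A) (sum g A)"
  by (induction A rule: infinite_finite_induct) (auto intro: mc_add)
lemma mc_multiple[simp]: "mc p d (d * c) 0"
  unfolding mc_def by (rule exI[of _ c], rule exI[of _ 0]) simp
lemma mc_multiple'[simp]: "mc p d (c * d) 0"
  using mc_multiple by (metis mult.commute)
lemma mc_cyclo[simp]: "mc p d (c * cyclo p) 0"
  unfolding mc_def by (rule exI[of _ 0], rule exI[of _ c]) simp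
lemma mc_iff_0: "mc p d x y \<longleftrightarrow> mc p d (x - y) 0"
  unfolding mc_def by simp
lemma mc_mono: "mc p (d * e) x y \<Longrightarrow> mc p d x y"
  unfolding mc_def by (metis mult.assoc)
lemma mc_dvd: "d dvd e \<Longrightarrow> mc p e x y \<Longrightarrow> mc p d x y"
  by (metis dvd_def mc_mono)
lemma mc_0_imp: "mc p 0 x y \<Longrightarrow> mc p d x y"
  using mc_dvd[of d 0] by simp
lemma mc_modulus: "mc p 0 d d' \<Longrightarrow> mc p d x y \<Longrightarrow> mc p d' x y"
proof -
  assume "mc p 0 d d'" "mc p d x y"
  then obtain c q c' q' where "d - d' = q*cyclo p" "x - y = d*c' + q'*cyclo p" unfolding mc_def by auto
  then have "x - y = d' * c' + (q' + q*c')*cyclo p" by (simp add: algebra_simps)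
  then show ?thesis unfolding mc_def by blast
qed
lemma mc_scale: "mc p d x y \<Longrightarrow> mc p (d * e) (x * e) (y * e)"
proof -
  assume "mc p d x y"
  then obtain c q where "x - y = d*c + q*cyclo p" unfolding mc_def by blast
  then have "x*e - y*e = (d*e)*c + (q*e)*cyclo p" by (simp add: algebra_simps flip: left_diff_distrib)
  then show ?thesis unfolding mc_def by blast
qed
lemma zeq_mc: "zeq p x y \<longleftrightarrow> mc p 0 x y"
  unfolding zeq_def zcong_def mc_def by auto
lemma zcong_mc: "zcong p m x y \<longleftrightarrow> mc p [:m:] x y"
  unfolding zcong_def mc_def by (auto simp: ac_simps)


locale cyc = fixes p :: nat assumes pr: "prime p" and od: "odd p"
begin

lemma p_ge3: "p \<ge> 3"
proof -
  have "p \<ge> 2" using pr prime_ge_2_nat by blast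
  moreover have "p \<noteq> 2" using od by auto
  ultimately show ?thesis by simp
qed
lemma p_gt0[simp]: "p > 0" using p_ge3 by simp

abbreviation Phi where "Phi \<equiv> cyclo p"
abbreviation XX :: "int poly" where "XX \<equiv> [:0,1:]"

lemma monom_X: "monom (1::int) i = XX ^ i"
  by (induction i) (auto simp: monom_Suc monom_0 one_pCons)

lemma cyclo_alt: "Phi = (\<Sum>i<p. XX ^ i)"
  unfolding cyclo_def by (simp add: monom_X)

lemma cyclo_mul: "(XX - 1) * Phi = XX ^ p - 1"
  unfolding cyclo_alt by (simp add: power_diff_1_eq)

lemma coeff_cyclo: "coeff Phi k = (if k < p then 1 else 0)"
  unfolding cyclo_def by (simp add: coeff_sum coeff_monom)

lemma degree_cyclo: "degree Phi = p - 1"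
  by (rule antisym) (auto intro!: degree_le le_degree simp: coeff_cyclo)

lemma lead_cyclo: "lead_coeff Phi = 1"
  by (simp add: degree_cyclo coeff_cyclo)

lemma cyclo_ne0: "Phi \<noteq> 0" using lead_cyclo by auto

lemma poly_cyclo_1: "poly Phi 1 = int p"
  unfolding cyclo_def by (simp add: poly_sum poly_monom)

definition ze :: complex where "ze = cis (2 * pi / p)"

lemma ze_pow: "ze ^ k = cis (2 * pi * k / p)"
  unfolding ze_def by (simp add: DeMoivre mult_ac)

lemma ze_p: "ze ^ p = 1"
  unfolding ze_pow by simp

lemma ze_pow_mod: "ze ^ k = ze ^ (k mod p)"
proof -
  have "ze ^ k = ze ^ (p * (k div p) + k mod p)" by simp
  also have "\<dots> = (ze ^ p) ^ (k div p) * ze ^ (k mod p)" by (simp only: power_add power_mult)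
  finally show ?thesis by (simp add: ze_p)
qed

lemma ze_inj: "a < p \<Longrightarrow> b < p \<Longrightarrow> ze ^ a = ze ^ b \<Longrightarrow> a = b"
  using bij_betw_roots_unity[OF p_gt0] unfolding bij_betw_def inj_on_def ze_pow by auto

lemma ze_pow_eq: "ze ^ a = ze ^ b \<longleftrightarrow> a mod p = b mod p"
  using ze_inj[of "a mod p" "b mod p"] ze_pow_mod[of a] ze_pow_mod[of b] by auto

lemma ze_pow_eq1: "ze ^ k = 1 \<longleftrightarrow> p dvd k"
  using ze_pow_eq[of k 0] by (simp add: dvd_eq_mod_eq_0)

lemma norm_ze[simp]: "norm (ze ^ k) = 1"
  unfolding ze_pow by simp

lemma ze_ne0[simp]: "ze ^ k \<noteq> 0"
  using norm_ze[of k] by (metis norm_zero zero_neq_one)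

lemma cnj_ze: "cnj (ze ^ k) = ze ^ (k * (p - 1))"
proof -
  have "ze ^ (k * (p - 1)) * ze ^ k = 1"
    using p_ge3 by (simp flip: power_add) (simp add: ze_pow_eq1 algebra_simps)
  moreover have "cnj (ze ^ k) * ze ^ k = 1"
    by (metis complex_norm_square norm_ze of_real_1 power_one mult.commute)
  ultimately show ?thesis by (metis ze_ne0 mult_right_cancel)
qed

lemma ev_X[simp]: "ev z XX = z" by simp

lemma ev_cyclo: "\<not> p dvd k \<Longrightarrow> ev (ze ^ k) Phi = 0"
proof -
  assume "\<not> p dvd k"
  then have ne: "ze ^ k \<noteq> 1" by (simp add: ze_pow_eq1)
  have "ev (ze ^ k) Phi = (\<Sum>i<p. (ze ^ k) ^ i)" unfolding cyclo_alt by (simp add: ev_sum)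
  also have "\<dots> = ((ze ^ k) ^ p - 1) / (ze ^ k - 1)" using ne by (simp add: geometric_sum)
  also have "(ze ^ k) ^ p = 1" by (simp flip: power_mult) (simp add: ze_pow_eq1)
  finally show ?thesis by simp
qed

lemma mc0_ev: "mc p 0 f g \<Longrightarrow> \<not> p dvd k \<Longrightarrow> ev (ze ^ k) f = ev (ze ^ k) g"
proof -
  assume "mc p 0 f g" "\<not> p dvd k"
  then obtain q where "f - g = q * Phi" unfolding mc_def by auto
  then have "ev (ze ^ k) (f - g) = 0" using ev_cyclo[OF \<open>\<not> p dvd k\<close>] by simp
  then show ?thesis by simp
qed

lemma reduce: "\<exists>q r. f = q * Phi + r \<and> degree r < p - 1"
proof -
  obtain q r where qr: "pseudo_divmod f Phi = (q, r)" by fastforce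
  from pseudo_divmod[OF cyclo_ne0 qr] have "f = Phi * q + r" "r = 0 \<or> degree r < p - 1"
    using lead_cyclo by (auto simp: degree_cyclo)
  moreover have "degree r < p - 1"
    using \<open>r = 0 \<or> degree r < p - 1\<close> p_ge3 by auto
  ultimately show ?thesis by (metis mult.commute)
qed

lemma small_zero:
  assumes "degree r < p - 1" "\<And>k. 0 < k \<Longrightarrow> k < p \<Longrightarrow> ev (ze ^ k) r = 0"
  shows "r = 0"
proof (rule ccontr)
  assume "r \<noteq> 0"
  define R where "R = map_poly (of_int :: int \<Rightarrow> complex) r"
  have R0: "R \<noteq> 0" using \<open>r \<noteq> 0\<close> by (simp add: R_def map_poly_eq_0_iff)
  have dR: "degree R = degree r" unfolding R_def by (simp add: degree_map_poly)
  have "(\<lambda>k. ze ^ k) ` {1..<p} \<subseteq> {x. poly R x = 0}"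
    using assms(2) by (auto simp: R_def ev_def)
  moreover have "card ((\<lambda>k. ze ^ k) ` {1..<p}) = p - 1"
    by (subst card_image) (auto simp: inj_on_def intro: ze_inj)
  ultimately have "p - 1 \<le> card {x. poly R x = 0}"
    by (metis card_mono poly_roots_finite R0)
  also have "\<dots> \<le> degree R" by (rule card_poly_roots_bound[OF R0])
  finally show False using assms(1) dR by simp
qed

lemma ev_mc0:
  assumes "\<And>k. 0 < k \<Longrightarrow> k < p \<Longrightarrow> ev (ze ^ k) f = ev (ze ^ k) g"
  shows "mc p 0 f g"
proof -
  obtain q r where qr: "f - g = q * Phi + r" "degree r < p - 1" using reduce by blast
  have "r = 0"
  proof (rule small_zero[OF qr(2)])
    fix k assume k: "0 < k" "k < p"
    then have "\<not> p dvd k" by (auto dest: dvd_imp_le)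
    have "ev (ze ^ k) (f - g) = 0" using assms[OF k] by simp
    then show "ev (ze ^ k) r = 0" unfolding qr using ev_cyclo[OF \<open>\<not> p dvd k\<close>] by simp
  qed
  then show ?thesis unfolding mc_def using qr by (metis add_0 add.right_neutral mult_zero_right)
qed

lemma mc0_iff_ev: "mc p 0 f g \<longleftrightarrow> (\<forall>k. 0 < k \<and> k < p \<longrightarrow> ev (ze ^ k) f = ev (ze ^ k) g)"
  using mc0_ev ev_mc0 by (meson dvd_imp_le linorder_not_le)

end

lemma binom_p:
  fixes z :: "'a::comm_ring_1"
  assumes "prime p" "p \<ge> 3"
  shows "\<exists>W. (1 + z) ^ p = 1 + of_nat p * z + of_nat p * z^2 * W + z ^ p"
proof -
  define W where "W = (\<Sum>k\<in>{2..<p}. of_nat ((p choose k) div p) * z ^ (k - 2))"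
  have "(1 + z) ^ p = (z + 1) ^ p" by (simp add: add.commute)
  also have "\<dots> = (\<Sum>k\<le>p. of_nat (p choose k) * z ^ k)" by (simp add: binomial_ring)
  also have "{..p} = insert 0 (insert 1 (insert p {2..<p}))" using assms by auto
  also have "(\<Sum>k\<in>insert 0 (insert 1 (insert p {2..<p})). of_nat (p choose k) * z ^ k)
      = 1 + (of_nat p * z + (z ^ p + (\<Sum>k\<in>{2..<p}. of_nat (p choose k) * z ^ k)))"
    using assms by (simp add: sum.insert)
  also have "(\<Sum>k\<in>{2..<p}. of_nat (p choose k) * z ^ k) = of_nat p * z^2 * W"
    unfolding W_def sum_distrib_left
  proof (rule sum.cong[OF refl])
    fix k assume k: "k \<in> {2..<p}"
    then have "p dvd (p choose k)" using assms by (intro dvd_choose_prime) auto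
    then have "p choose k = p * ((p choose k) div p)" by simp
    moreover have "z ^ k = z^2 * z ^ (k - 2)"
    proof -
      have "k = 2 + (k - 2)" using k by auto
      then show ?thesis by (metis power_add)
    qed
    ultimately show "of_nat (p choose k) * z ^ k = of_nat p * z\<^sup>2 * (of_nat ((p choose k) div p) * z ^ (k - 2))"
      by (metis (no_types, lifting) mult.assoc mult.left_commute of_nat_mult)
  qed
  finally show ?thesis by (auto simp: algebra_simps)
qed

context cyc begin

abbreviation PI :: "int poly" where "PI \<equiv> piz"

lemma poly_piz[simp]: "poly piz 1 = 0" by (simp add: piz_def)
lemma piz_ne0[simp]: "piz \<noteq> 0" by (simp add: piz_def)
lemma piz_alt: "piz = 1 - XX" by (simp add: piz_def one_pCons)

lemma mc_one[simp]: "mc p 1 x y"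
  unfolding mc_def by (rule exI[of _ "x - y"], rule exI[of _ 0]) simp

lemma mc_congr0: "mc p d x 0 \<Longrightarrow> mc p 0 x x' \<Longrightarrow> mc p d x' 0"
  using mc_0_imp mc_sym mc_trans by blast

lemma mc_pi_const: "mc p piz x [:poly x 1:]"
proof -
  have "poly (x - [:poly x 1:]) 1 = 0" by simp
  then obtain g where g: "x - [:poly x 1:] = [:-1, 1:] * g" using poly_eq_0_iff_dvd by (metis dvd_def)
  have "[:-1, 1:] = - piz" by (simp add: piz_def)
  then have "x - [:poly x 1:] = piz * (-g) + 0 * Phi" using g by simp
  then show ?thesis unfolding mc_def by blast
qed

lemma mc_pi_int: "mc p piz [:n:] 0 \<longleftrightarrow> int p dvd n"
proof
  assume "mc p piz [:n:] 0"
  then obtain c q where "[:n:] = piz * c + q * Phi" unfolding mc_def by auto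
  then have "poly [:n:] 1 = poly q 1 * int p" by (simp add: poly_cyclo_1)
  then show "int p dvd n" by simp
next
  assume "int p dvd n"
  then obtain m where m: "n = int p * m" by auto
  have "mc p piz Phi [:int p:]" using mc_pi_const[of Phi] by (simp add: poly_cyclo_1)
  then have "mc p piz (Phi * [:m:]) ([:int p:] * [:m:])" by (rule mc_mult) simp
  moreover have "mc p piz (Phi * [:m:]) 0" by (metis mc_cyclo mult.commute)
  moreover have "[:n:] = [:int p:] * [:m:]" using m by simp
  ultimately show "mc p piz [:n:] 0" by (metis mc_sym mc_trans)
qed

lemma mc_pi_iff: "mc p piz x 0 \<longleftrightarrow> int p dvd poly x 1"
  using mc_pi_const[of x] mc_pi_int[of "poly x 1"] mc_sym mc_trans by blast

lemma pi_prime: "mc p piz (x * y) 0 \<Longrightarrow> mc p piz x 0 \<or> mc p piz y 0"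
  unfolding mc_pi_iff using pr by (simp add: prime_dvd_mult_iff prime_nat_int_transfer)

lemma pi_cancel1: "mc p (piz * d) (piz * z) 0 \<Longrightarrow> mc p d z 0"
proof -
  assume "mc p (piz * d) (piz * z) 0"
  then obtain c q where e: "piz * z = piz * d * c + q * Phi" unfolding mc_def by auto
  have "poly (piz * z) 1 = poly (piz * d * c + q * Phi) 1" using e by simp
  then have "poly q 1 = 0" using p_gt0 by (simp add: poly_cyclo_1)
  then obtain g where g: "q = [:-1, 1:] * g" using poly_eq_0_iff_dvd by (metis dvd_def)
  have "[:-1, 1:] = - piz" by (simp add: piz_def)
  then have "piz * z = piz * (d * c - g * Phi)" using e g by (simp add: algebra_simps)
  then have "z - 0 = d * c + (-g) * Phi" by simp
  then show ?thesis unfolding mc_def by blast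
qed

lemma pi_cancel: "mc p (piz ^ a * d) (piz ^ a * z) 0 \<Longrightarrow> mc p d z 0"
  by (induction a) (auto simp: mult.assoc dest: pi_cancel1)

lemma pi_pow_mono: "a \<le> b \<Longrightarrow> mc p (piz ^ b) x y \<Longrightarrow> mc p (piz ^ a) x y"
  by (rule mc_dvd[of _ "piz ^ b"]) (simp_all add: le_imp_power_dvd)

lemma pi_unit_cancel:
  assumes "mc p (piz ^ k) (c * y) 0" "\<not> mc p piz c 0"
  shows "mc p (piz ^ k) y 0"
  using assms(1)
proof (induction k)
  case 0 then show ?case by simp
next
  case (Suc k)
  then have "mc p (piz ^ k) y 0" using pi_pow_mono[of k "Suc k"] by auto
  then obtain y' q where y: "y = piz ^ k * y' + q * Phi" unfolding mc_def by auto
  have "c * y = piz ^ k * (c * y') + (c * q) * Phi" unfolding y by (simp add: algebra_simps)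
  then have "mc p 0 (c * y) (piz ^ k * (c * y'))" unfolding mc_def by (metis add_diff_cancel_left' mult_zero_left add_0)
  then have "mc p (piz ^ k * piz) (piz ^ k * (c * y')) 0" using Suc.prems mc_congr0 by (simp add: mult.commute)
  then have "mc p piz (c * y') 0" by (rule pi_cancel)
  then have "mc p piz y' 0" using pi_prime assms(2) by blast
  then obtain y'' q' where "y' = piz * y'' + q' * Phi" unfolding mc_def by auto
  then have "y = piz ^ Suc k * y'' + (q + piz ^ k * q') * Phi" unfolding y by (simp add: algebra_simps)
  then show ?case unfolding mc_def by auto
qed

end

context cyc begin

lemma cyclo_decomp: "\<exists>W. Phi = [:int p:] * (1 - piz * W) + piz ^ (p - 1)"
proof -
  define Y where "Y = XX - 1"
  obtain W where W: "(1 + Y) ^ p = 1 + of_nat p * Y + of_nat p * Y^2 * W + Y ^ p"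
    using binom_p[OF pr p_ge3] by blast
  have Yne: "Y \<noteq> 0" unfolding Y_def by (simp add: one_pCons)
  have "Y ^ p = Y * Y ^ (p - 1)" using p_ge3 by (metis power_Suc Suc_pred' p_gt0)
  moreover have "Y * Phi = (1 + Y) ^ p - 1" unfolding Y_def using cyclo_mul by simp
  ultimately have "Y * Phi = Y * (of_nat p + of_nat p * Y * W + Y ^ (p - 1))"
    using W by (simp add: algebra_simps power2_eq_square)
  then have e: "Phi = of_nat p + of_nat p * Y * W + Y ^ (p - 1)" using Yne by simp
  have Ym: "Y = - piz" unfolding Y_def piz_alt by simp
  have "even (p - 1)" using od p_ge3 by simp
  then have h1: "(- piz) ^ (p - 1) = piz ^ (p - 1)" by simp
  have h2: "(of_nat p :: int poly) = [:int p:]" by (simp add: of_nat_poly)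
  have "Phi = [:int p:] + [:int p:] * (- piz) * W + piz ^ (p - 1)"
    using e unfolding h2 Ym h1 .
  also have "\<dots> = [:int p:] * (1 - piz * W) + piz ^ (p - 1)" by (simp add: algebra_simps)
  finally have "Phi = [:int p:] * (1 - piz * W) + piz ^ (p - 1)" .
  then show ?thesis by blast
qed

definition Wc where "Wc = (SOME W. Phi = [:int p:] * (1 - piz * W) + piz ^ (p - 1))"

lemma Wc: "Phi = [:int p:] * (1 - piz * Wc) + piz ^ (p - 1)"
  unfolding Wc_def using someI_ex[OF cyclo_decomp] .

lemma pi_p1: "mc p 0 (piz ^ (p - 1)) ([:int p:] * (piz * Wc - 1))"
proof -
  have "piz ^ (p - 1) - [:int p:] * (piz * Wc - 1) = Phi"
    using Wc by (simp add: algebra_simps)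
  then have "piz ^ (p - 1) - [:int p:] * (piz * Wc - 1) = 0 * 0 + 1 * Phi" by simp
  then show ?thesis unfolding mc_def by blast
qed

definition Sc where "Sc = (\<Sum>i<p - 1. (piz * Wc) ^ i)"
definition cc where "cc = [:int p:] * Wc ^ (p - 1) - Sc"

lemma p_pi: "mc p 0 [:int p:] (piz ^ (p - 1) * cc)"
proof -
  define s where "s = piz * Wc"
  have a: "[:int p:] * (1 - s) = Phi - piz ^ (p - 1)" using Wc unfolding s_def by (simp add: algebra_simps)
  have b: "(1 - s) * Sc = 1 - s ^ (p - 1)"
    unfolding Sc_def s_def using power_diff_1_eq[of "piz * Wc" "p - 1"] by (simp add: algebra_simps)
  have "[:int p:] * (1 - s ^ (p - 1)) = (Phi - piz ^ (p - 1)) * Sc"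
    using a b by (metis mult.assoc)
  moreover have "s ^ (p - 1) = piz ^ (p - 1) * Wc ^ (p - 1)" unfolding s_def by (simp add: power_mult_distrib)
  ultimately have "[:int p:] - piz ^ (p - 1) * cc = 0 * 0 + Sc * Phi"
    unfolding cc_def by (simp add: algebra_simps)
  then show ?thesis unfolding mc_def by blast
qed

lemma cc_unit: "\<not> mc p piz cc 0"
proof -
  have "poly Sc 1 = (\<Sum>i<p - 1. (0::int) ^ i)" unfolding Sc_def by (simp add: poly_sum)
  also have "\<dots> = (\<Sum>i<p - 1. if i = 0 then 1 else 0)" by (simp add: power_0_left)
  also have "\<dots> = 1" using p_ge3 by (simp add: sum.delta)
  finally have "poly Sc 1 = 1" .
  then have "poly cc 1 = int p * poly Wc 1 ^ (p - 1) - 1" unfolding cc_def by simp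
  moreover have "\<not> int p dvd int p * poly Wc 1 ^ (p - 1) - 1"
  proof
    assume a: "int p dvd int p * poly Wc 1 ^ (p - 1) - 1"
    have b: "int p dvd int p * poly Wc 1 ^ (p - 1)" by simp
    have "int p dvd int p * poly Wc 1 ^ (p - 1) - (int p * poly Wc 1 ^ (p - 1) - 1)"
      using dvd_diff[OF b a] .
    then have "int p dvd 1" by simp
    then show False using p_ge3 by simp
  qed
  ultimately show ?thesis unfolding mc_pi_iff by simp
qed

lemma pi_to_p: "mc p (piz ^ ((p - 1) * k)) x y \<Longrightarrow> mc p [:int p ^ k:] x y"
proof -
  assume h: "mc p (piz ^ ((p - 1) * k)) x y"
  have "mc p 0 ((piz ^ (p - 1)) ^ k) (([:int p:] * (piz * Wc - 1)) ^ k)"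
    by (rule mc_power[OF pi_p1])
  then have "mc p 0 (piz ^ ((p - 1) * k)) ([:int p ^ k:] * (piz * Wc - 1) ^ k)"
    by (simp add: power_mult power_mult_distrib poly_const_pow smult_power)
  from mc_modulus[OF this h] show ?thesis by (rule mc_mono)
qed

lemma p_to_pi: "mc p [:int p ^ k:] x y \<Longrightarrow> mc p (piz ^ ((p - 1) * k)) x y"
proof -
  assume h: "mc p [:int p ^ k:] x y"
  have "mc p 0 ([:int p:] ^ k) ((piz ^ (p - 1) * cc) ^ k)"
    by (rule mc_power[OF p_pi])
  then have "mc p 0 [:int p ^ k:] (piz ^ ((p - 1) * k) * cc ^ k)"
    by (simp add: power_mult power_mult_distrib poly_const_pow smult_power)
  from mc_modulus[OF this h] show ?thesis by (rule mc_mono)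
qed

lemma p_pi_mult: "mc p 0 ([:int p:] * z) (piz ^ (p - 1) * (cc * z))"
  using mc_mult[OF p_pi mc_refl[of p 0 z]] by (simp add: mult.assoc)

lemma int_pi2: "mc p (piz ^ (p + 1)) [:n:] 0 \<Longrightarrow> int p ^ 2 dvd n"
proof -
  assume h: "mc p (piz ^ (p + 1)) [:n:] 0"
  then have "mc p piz [:n:] 0" using pi_pow_mono[of 1 "p + 1"] by simp
  then obtain n' where n: "n = int p * n'" using mc_pi_int by (auto elim: dvdE)
  have e: "[:int p:] * [:n':] = [:n:]" using n by simp
  from p_pi_mult[of "[:n':]"] have "mc p 0 [:n:] (piz ^ (p - 1) * (cc * [:n':]))" by (simp only: e)
  moreover have "piz ^ (p + 1) = piz ^ (p - 1) * piz ^ 2"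
  proof -
    have "p + 1 = (p - 1) + 2" using p_ge3 by simp
    then show ?thesis by (metis power_add)
  qed
  ultimately have "mc p (piz ^ (p - 1) * piz ^ 2) (piz ^ (p - 1) * (cc * [:n':])) 0"
    using h mc_congr0 by metis
  then have "mc p (piz ^ 2) (cc * [:n':]) 0" by (rule pi_cancel)
  then have "mc p (piz ^ 2) [:n':] 0" using pi_unit_cancel cc_unit by blast
  then have "mc p piz [:n':] 0" using pi_pow_mono[of 1 2] by simp
  then have "int p dvd n'" using mc_pi_int by blast
  then show ?thesis using n by (simp add: power2_eq_square)
qed

lemma small_mult_cyclo: "degree h < p - 1 \<Longrightarrow> h = q * Phi \<Longrightarrow> h = 0"
proof (rule ccontr)
  assume "degree h < p - 1" "h = q * Phi" "h \<noteq> 0"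
  then have "q \<noteq> 0" by auto
  then have "degree h = degree q + (p - 1)" using \<open>h = q * Phi\<close> cyclo_ne0 by (simp add: degree_mult_eq degree_cyclo)
  then show False using \<open>degree h < p - 1\<close> by simp
qed

lemma all_p_pow_zero:
  assumes "\<And>k. mc p [:int p ^ k:] x 0"
  shows "mc p 0 x 0"
proof -
  obtain q r where qr: "x = q * Phi + r" "degree r < p - 1" using reduce by blast
  have "\<forall>i. coeff r i = 0"
  proof
    fix i
    have "int p ^ k dvd coeff r i" for k
    proof -
      obtain c q' where c: "x - 0 = [:int p ^ k:] * c + q' * Phi" using assms[of k] unfolding mc_def by blast
      obtain q'' r'' where r'': "c = q'' * Phi + r''" "degree r'' < p - 1" using reduce by blast
      have "r - smult (int p ^ k) r'' = (q' + smult (int p ^ k) q'' - q) * Phi"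
        using c qr(1) r''(1) by (simp add: algebra_simps smult_add_right mult_smult_left)
      moreover have "degree (r - smult (int p ^ k) r'') < p - 1"
        using qr(2) r''(2) by (meson degree_diff_less degree_smult_le le_less_trans)
      ultimately have "r = smult (int p ^ k) r''" using small_mult_cyclo by fastforce
      then show ?thesis by simp
    qed
    then have "int p ^ nat \<bar>coeff r i\<bar> dvd coeff r i" by blast
    moreover have "\<bar>coeff r i\<bar> < int p ^ nat \<bar>coeff r i\<bar>"
    proof -
      have "nat \<bar>coeff r i\<bar> < 2 ^ nat \<bar>coeff r i\<bar>" by (rule less_exp)
      then have "int (nat \<bar>coeff r i\<bar>) < int (2 ^ nat \<bar>coeff r i\<bar>)" by linarith
      then have "\<bar>coeff r i\<bar> < 2 ^ nat \<bar>coeff r i\<bar>" by simp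
      also have "(2::int) ^ nat \<bar>coeff r i\<bar> \<le> int p ^ nat \<bar>coeff r i\<bar>" using p_ge3 by (intro power_mono) auto
      finally show ?thesis .
    qed
    ultimately show "coeff r i = 0"
    proof -
      assume d: "int p ^ nat \<bar>coeff r i\<bar> dvd coeff r i" and l: "\<bar>coeff r i\<bar> < int p ^ nat \<bar>coeff r i\<bar>"
      show "coeff r i = 0"
      proof (rule ccontr)
        assume "coeff r i \<noteq> 0"
        from dvd_imp_le_int[OF this d] l show False by simp
      qed
    qed
  qed
  then have "r = 0" by (simp add: poly_eq_iff)
  then have "x - 0 = 0 * 0 + q * Phi" using qr by simp
  then show ?thesis unfolding mc_def by blast
qed

end

context cyc begin

lemma ev_coeffs: "degree r < n \<Longrightarrow> ev z r = (\<Sum>j<n. of_int (coeff r j) * z ^ j)"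
proof -
  assume "degree r < n"
  then have "(\<Sum>i\<le>n - 1. monom (coeff r i) i) = r" by (intro poly_as_sum_of_monoms') auto
  moreover have "{..n - 1} = {..<n}" using \<open>degree r < n\<close> by auto
  ultimately have "r = (\<Sum>i<n. monom (coeff r i) i)" by simp
  then have "ev z r = ev z (\<Sum>i<n. monom (coeff r i) i)" by simp
  then show ?thesis by (simp add: ev_sum)
qed

lemma inner_sum: "i < p \<Longrightarrow> j < p \<Longrightarrow> (\<Sum>k<p. ze ^ (k * (j + p - i))) = (if j = i then of_nat p else 0)"
proof -
  assume ij: "i < p" "j < p"
  have e: "(\<Sum>k<p. ze ^ (k * (j + p - i))) = (\<Sum>k<p. (ze ^ (j + p - i)) ^ k)"
    by (simp add: power_mult mult.commute flip: power_mult)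
  show ?thesis
  proof (cases "j = i")
    case True
    then have "ze ^ (j + p - i) = 1" by (simp add: ze_p)
    then show ?thesis using e True by simp
  next
    case False
    have "\<not> p dvd (j + p - i)"
    proof
      assume "p dvd (j + p - i)"
      moreover have "0 < j + p - i" "j + p - i < 2 * p" "j + p - i \<noteq> p" using ij False by auto
      ultimately obtain c where c: "j + p - i = p * c" "0 < p * c" "p * c < p * 2" "p * c \<noteq> p"
        by (metis dvdE mult.commute)
      then have "c < 2" "c > 0" by (simp_all add: mult_less_cancel1)
      then have "c = 1" by simp
      then show False using c by simp
    qed
    then have ne: "ze ^ (j + p - i) \<noteq> 1" by (simp add: ze_pow_eq1)
    have "(ze ^ (j + p - i)) ^ p = 1" by (metis power_mult mult.commute ze_p power_one)
    then show ?thesis using e False ne by (simp add: geometric_sum)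
  qed
qed

lemma dft:
  assumes "degree r < p" "i < p"
  shows "(\<Sum>k<p. ev (ze ^ k) r * ze ^ (k * (p - i))) = of_nat p * of_int (coeff r i)"
proof -
  have "(\<Sum>k<p. ev (ze ^ k) r * ze ^ (k * (p - i)))
      = (\<Sum>k<p. \<Sum>j<p. of_int (coeff r j) * ze ^ (k * (j + p - i)))"
  proof (rule sum.cong[OF refl])
    fix k assume "k \<in> {..<p}"
    have "ev (ze ^ k) r * ze ^ (k * (p - i)) = (\<Sum>j<p. of_int (coeff r j) * (ze ^ k) ^ j) * ze ^ (k * (p - i))"
      using ev_coeffs[OF assms(1)] by simp
    also have "\<dots> = (\<Sum>j<p. of_int (coeff r j) * ze ^ (k * (j + p - i)))"
      unfolding sum_distrib_right
    proof (rule sum.cong[OF refl])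
      fix j assume "j \<in> {..<p}"
      have "k * (j + p - i) = k * j + k * (p - i)" using assms(2) by (simp add: algebra_simps)
      then show "of_int (coeff r j) * (ze ^ k) ^ j * ze ^ (k * (p - i)) = of_int (coeff r j) * ze ^ (k * (j + p - i))"
        by (simp add: power_add power_mult)
    qed
    finally show "ev (ze ^ k) r * ze ^ (k * (p - i)) = (\<Sum>j<p. of_int (coeff r j) * ze ^ (k * (j + p - i)))" .
  qed
  also have "\<dots> = (\<Sum>j<p. of_int (coeff r j) * (\<Sum>k<p. ze ^ (k * (j + p - i))))"
    by (subst sum.swap) (simp add: sum_distrib_left)
  also have "\<dots> = (\<Sum>j<p. of_int (coeff r j) * (if j = i then of_nat p else 0))"
    using inner_sum assms(2) by simp
  also have "\<dots> = (\<Sum>j<p. if j = i then of_nat p * of_int (coeff r i) else 0)"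
    by (intro sum.cong) auto
  also have "\<dots> = of_nat p * of_int (coeff r i)" using assms(2) by (simp add: sum.delta)
  finally show ?thesis .
qed

lemma coeff_bound:
  assumes "degree r < p - 1" "\<And>k. 0 < k \<Longrightarrow> k < p \<Longrightarrow> norm (ev (ze ^ k) r) = 1" "i < p"
  shows "\<bar>coeff r i\<bar> \<le> 1"
proof -
  have dr: "degree r < p" using assms(1) by simp
  have sp: "{..<p} = insert 0 {1..<p}" by auto
  have bnd: "norm (\<Sum>k\<in>{1..<p}. ev (ze ^ k) r * ze ^ (k * (p - j))) \<le> of_nat (p - 1)" for j
  proof -
    have "norm (\<Sum>k\<in>{1..<p}. ev (ze ^ k) r * ze ^ (k * (p - j))) \<le> (\<Sum>k\<in>{1..<p}. norm (ev (ze ^ k) r * ze ^ (k * (p - j))))"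
      by (rule norm_sum)
    also have "\<dots> = (\<Sum>k\<in>{1..<p}. 1)" using assms(2) by (intro sum.cong) (auto simp: norm_mult)
    finally show ?thesis by simp
  qed
  have "coeff r (p - 1) = 0" using assms(1) by (simp add: coeff_eq_0)
  then have "(\<Sum>k<p. ev (ze ^ k) r * ze ^ (k * (p - (p - 1)))) = 0" using dft[OF dr, of "p - 1"] by simp
  then have "ev 1 r + (\<Sum>k\<in>{1..<p}. ev (ze ^ k) r * ze ^ (k * (p - (p - 1)))) = 0"
    unfolding sp by (simp add: sum.insert)
  then have n1: "norm (ev 1 r) \<le> of_nat (p - 1)" using bnd[of "p - 1"] by (metis add_eq_0_iff norm_minus_cancel)
  have "of_nat p * of_int (coeff r i) = ev 1 r + (\<Sum>k\<in>{1..<p}. ev (ze ^ k) r * ze ^ (k * (p - i)))"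
    using dft[OF dr assms(3)] unfolding sp by (simp add: sum.insert)
  then have "norm (of_nat p * (of_int (coeff r i) :: complex)) \<le> of_nat (p - 1) + of_nat (p - 1)"
    using n1 bnd[of i] by (metis norm_triangle_mono)
  then have "real p * \<bar>real_of_int (coeff r i)\<bar> \<le> 2 * real (p - 1)" by (simp add: norm_mult)
  moreover have "real (p - 1) = real p - 1" using p_ge3 by (simp add: of_nat_diff)
  ultimately have "real p * \<bar>real_of_int (coeff r i)\<bar> < real p * 2" by linarith
  then have "\<bar>real_of_int (coeff r i)\<bar> < 2" by simp
  then show ?thesis by linarith
qed

lemma finite_small_polys: "finite {r :: int poly. degree r < p - 1 \<and> (\<forall>i. \<bar>coeff r i\<bar> \<le> 1)}" (is "finite ?S")
proof -
  let ?f = "\<lambda>r::int poly. map (coeff r) [0..<p - 1]"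
  have inj: "inj_on ?f ?S"
  proof (rule inj_onI)
    fix r s assume "r \<in> ?S" "s \<in> ?S" "?f r = ?f s"
    then have "coeff r i = coeff s i" for i
      by (cases "i < p - 1") (auto simp: coeff_eq_0 dest: map_eq_conv[THEN iffD1] simp: map_eq_conv)
    then show "r = s" by (simp add: poly_eq_iff)
  qed
  have "?f ` ?S \<subseteq> {xs. set xs \<subseteq> {-1, 0, 1} \<and> length xs = p - 1}"
  proof
    fix xs assume "xs \<in> ?f ` ?S"
    then obtain r where r: "r \<in> ?S" "xs = ?f r" by blast
    have "set xs \<subseteq> {-1, 0, 1}"
    proof
      fix x assume "x \<in> set xs"
      then obtain i where "x = coeff r i" using r by auto
      then have "\<bar>x\<bar> \<le> 1" using r by simp
      then show "x \<in> {-1, 0, 1}" by auto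
    qed
    then show "xs \<in> {xs. set xs \<subseteq> {-1, 0, 1} \<and> length xs = p - 1}" using r by simp
  qed
  moreover have "finite {xs. set xs \<subseteq> {-1::int, 0, 1} \<and> length xs = p - 1}"
    by (rule finite_lists_length_eq) simp
  ultimately have "finite (?f ` ?S)" by (rule finite_subset)
  then show ?thesis using inj by (rule finite_imageD)
qed

end

context cyc begin

lemma ev_conjz: "ev (ze ^ k) (conjz p f) = cnj (ev (ze ^ k) f)"
proof -
  have "ev (ze ^ k) (conjz p f) = ev ((ze ^ k) ^ (p - 1)) f"
    unfolding conjz_def by (simp add: ev_pcompose)
  also have "(ze ^ k) ^ (p - 1) = cnj (ze ^ k)" unfolding cnj_ze[of k] by (simp only: power_mult)
  finally show ?thesis by (simp add: ev_cnj)
qed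

lemma ev_unit: "mc p 0 (u * v) 1 \<Longrightarrow> 0 < k \<Longrightarrow> k < p \<Longrightarrow> ev (ze ^ k) u * ev (ze ^ k) v = 1"
  using mc0_iff_ev by fastforce

lemma kummer_finite:
  assumes uv: "mc p 0 (u * v) 1"
  shows "\<exists>N>0. mc p 0 ((u * conjz p v) ^ N) 1"
proof -
  define w where "w = u * conjz p v"
  have nw: "norm (ev (ze ^ k) w) = 1" if "0 < k" "k < p" for k
  proof -
    have "norm (ev (ze ^ k) w) = norm (ev (ze ^ k) u) * norm (ev (ze ^ k) v)"
      unfolding w_def by (simp add: ev_conjz norm_mult)
    also have "\<dots> = norm (ev (ze ^ k) u * ev (ze ^ k) v)" by (simp add: norm_mult)
    also have "\<dots> = 1" using ev_unit[OF uv that] by simp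
    finally show ?thesis .
  qed
  define P where "P = (\<lambda>m r. \<exists>q. w ^ m = q * Phi + r \<and> degree r < p - 1)"
  define R where "R = (\<lambda>m. SOME r. P m r)"
  have PR: "P m (R m)" for m unfolding R_def by (rule someI_ex) (use reduce[of "w ^ m"] P_def in blast)
  have evR: "ev (ze ^ k) (R m) = ev (ze ^ k) w ^ m" if "0 < k" "k < p" for k m
  proof -
    obtain q where q: "w ^ m = q * Phi + R m" using PR[of m] P_def by auto
    have nd: "\<not> p dvd k" using that by (auto dest: dvd_imp_le)
    from arg_cong[OF q, of "ev (ze ^ k)"] show ?thesis using ev_cyclo[OF nd] by simp
  qed
  let ?S = "{r :: int poly. degree r < p - 1 \<and> (\<forall>i. \<bar>coeff r i\<bar> \<le> 1)}"
  have "R m \<in> ?S" for m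
  proof -
    have d: "degree (R m) < p - 1" using PR[of m] P_def by auto
    have "\<bar>coeff (R m) i\<bar> \<le> 1" for i
    proof (cases "i < p")
      case True
      show ?thesis
      proof (rule coeff_bound[OF d _ True])
        fix k :: nat assume "0 < k" "k < p"
        then show "norm (ev (ze ^ k) (R m)) = 1" using evR nw by (simp add: norm_power)
      qed
    next
      case False
      then show ?thesis using d by (simp add: coeff_eq_0)
    qed
    then show ?thesis using d by simp
  qed
  then have "range R \<subseteq> ?S" by auto
  then have "finite (range R)" using finite_small_polys finite_subset by blast
  then have "\<not> inj R" using finite_imageD infinite_UNIV_nat by blast
  then obtain m n where mn: "m \<noteq> n" "R m = R n" unfolding inj_def by blast
  then obtain a b where ab: "a < b" "R a = R b" by (metis linorder_neqE_nat)
  have "mc p 0 (w ^ (b - a)) 1"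
  proof (rule ev_mc0)
    fix k :: nat assume k: "0 < k" "k < p"
    define z where "z = ev (ze ^ k) w"
    have "z \<noteq> 0" using nw[OF k] unfolding z_def by auto
    have "z ^ a = z ^ b" using evR[OF k, of a] evR[OF k, of b] ab unfolding z_def by simp
    also have "z ^ b = z ^ a * z ^ (b - a)" using ab by (simp flip: power_add)
    finally have "z ^ (b - a) = 1" using \<open>z \<noteq> 0\<close> by simp
    then show "ev (ze ^ k) (w ^ (b - a)) = ev (ze ^ k) 1" unfolding z_def by simp
  qed
  then show ?thesis using ab unfolding w_def by (intro exI[of _ "b - a"]) auto
qed

end

context cyc begin

lemma mc_mult0: "mc p d x 0 \<Longrightarrow> mc p e y 0 \<Longrightarrow> mc p (d * e) (x * y) 0"
proof -
  assume "mc p d x 0" "mc p e y 0"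
  then obtain c q c' q' where "x = d * c + q * Phi" "y = e * c' + q' * Phi" unfolding mc_def by auto
  then have "x * y - 0 = (d * e) * (c * c') + (q * (e * c') + d * c * q' + q * q' * Phi) * Phi"
    by (simp add: algebra_simps)
  then show ?thesis unfolding mc_def by blast
qed

lemma mc_pow0: "mc p d x 0 \<Longrightarrow> mc p (d ^ n) (x ^ n) 0"
  by (induction n) (auto intro: mc_mult0)

lemma mc_times: "mc p d x 0 \<Longrightarrow> mc p d (x * z) 0"
  using mc_mult[of p d x 0 z z] by simp

lemma p_div: "mc p (piz ^ (p - 1)) [:int p:] 0"
  using mc_congr0[OF mc_multiple mc_sym[OF p_pi]] .

definition ex :: "nat \<Rightarrow> int poly \<Rightarrow> bool" where
  "ex t x \<longleftrightarrow> mc p (piz ^ t) x 0 \<and> \<not> mc p (piz ^ Suc t) x 0"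

lemma nonzero_val:
  assumes "\<not> mc p 0 x 0" shows "\<exists>t. ex t x"
proof -
  have "\<exists>t. \<not> mc p (piz ^ t) x 0"
  proof (rule ccontr)
    assume "\<not> (\<exists>t. \<not> mc p (piz ^ t) x 0)"
    then have "mc p [:int p ^ k:] x 0" for k using pi_to_p by blast
    then show False using all_p_pow_zero assms by blast
  qed
  then have ex1: "\<not> mc p (piz ^ (LEAST t. \<not> mc p (piz ^ t) x 0)) x 0" by (rule LeastI_ex)
  define K where "K = (LEAST t. \<not> mc p (piz ^ t) x 0)"
  have "K \<noteq> 0" using ex1 unfolding K_def[symmetric] by (metis power_0 mc_one)
  then obtain t where t: "K = Suc t" by (cases K) auto
  have "mc p (piz ^ t) x 0" using not_less_Least[of t "\<lambda>t. \<not> mc p (piz ^ t) x 0"] t K_def by auto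
  then show ?thesis using ex1 unfolding K_def[symmetric] t ex_def by blast
qed

lemma sum_pow_cong:
  assumes "[a = 1] (mod int p)" shows "[(\<Sum>i<N. a ^ i) = int N] (mod int p)"
proof (induction N)
  case 0 then show ?case by simp
next
  case (Suc N)
  have "[a ^ N = 1] (mod int p)" using cong_pow[OF assms, of N] by simp
  from cong_add[OF Suc.IH this] show ?case by (simp add: add.commute)
qed

lemma root_one:
  assumes w2: "mc p (piz ^ 2) w 1" and N: "N > 0" and wN: "mc p 0 (w ^ N) 1"
  shows "mc p 0 w 1"
proof (rule ccontr)
  assume "\<not> mc p 0 w 1"
  then have "\<not> mc p 0 (w - 1) 0" using mc_iff_0 by blast
  then obtain t where t: "ex t (w - 1)" using nonzero_val by blast
  have w20: "mc p (piz ^ 2) (w - 1) 0" using w2 mc_iff_0 by blast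
  have t2: "t \<ge> 2"
  proof (rule ccontr)
    assume "\<not> t \<ge> 2"
    then have "Suc t \<le> 2" by simp
    then show False using pi_pow_mono[OF _ w20] t unfolding ex_def by blast
  qed
  have w1: "mc p piz (w - 1) 0" using pi_pow_mono[of 1 2] w20 by simp
  then have pw: "[poly w 1 = 1] (mod int p)" unfolding mc_pi_iff by (simp add: cong_iff_dvd_diff)
  have claim: "\<exists>s\<ge>2. ex s (w ^ n - 1)" if "n > 0" for n
    using that
  proof (induction n rule: less_induct)
    case (less n)
    show ?case
    proof (cases "p dvd n")
      case False
      define S where "S = (\<Sum>i<n. w ^ i)"
      have e: "w ^ n - 1 = (w - 1) * S" unfolding S_def by (rule power_diff_1_eq)
      have "poly S 1 = (\<Sum>i<n. poly w 1 ^ i)" unfolding S_def by (simp add: poly_sum)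
      then have "[poly S 1 = int n] (mod int p)" using sum_pow_cong[OF pw] by simp
      then have "\<not> int p dvd poly S 1" using False by (metis cong_dvd_iff int_dvd_int_iff)
      then have Su: "\<not> mc p piz S 0" unfolding mc_pi_iff .
      have "ex t (w ^ n - 1)"
        unfolding ex_def e
      proof
        show "mc p (piz ^ t) ((w - 1) * S) 0" using t unfolding ex_def by (blast intro: mc_times)
        show "\<not> mc p (piz ^ Suc t) ((w - 1) * S) 0"
          using pi_unit_cancel[of "Suc t" S "w - 1"] Su t unfolding ex_def by (metis mult.commute)
      qed
      then show ?thesis using t2 by blast
    next
      case True
      then obtain m where m: "n = p * m" by (auto elim: dvdE)
      then have "m > 0" "m < n" using less.prems p_ge3 by auto
      then obtain s where s: "s \<ge> 2" "ex s (w ^ m - 1)" using less.IH by blast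
      define y where "y = w ^ m - 1"
      obtain W where W: "(1 + y) ^ p = 1 + of_nat p * y + of_nat p * y^2 * W + y ^ p"
        using binom_p[OF pr p_ge3] by blast
      have op: "(of_nat p :: int poly) = [:int p:]" by (simp add: of_nat_poly)
      have "w ^ n = (1 + y) ^ p" unfolding y_def m by (simp add: power_mult mult.commute)
      then have e: "w ^ n - 1 = [:int p:] * y + ([:int p:] * y^2 * W + y ^ p)" using W op by simp
      have ys: "mc p (piz ^ s) y 0" using s unfolding ex_def y_def by blast
      have yns: "\<not> mc p (piz ^ Suc s) y 0" using s unfolding ex_def y_def by blast
      have A1: "mc p (piz ^ (s + (p - 1))) ([:int p:] * y) 0"
        using mc_mult0[OF p_div ys] by (simp add: power_add mult.commute)
      have A2: "\<not> mc p (piz ^ (s + p)) ([:int p:] * y) 0"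
      proof
        assume a: "mc p (piz ^ (s + p)) ([:int p:] * y) 0"
        have "s + p = (p - 1) + Suc s" using p_ge3 by simp
        then have "piz ^ (s + p) = piz ^ (p - 1) * piz ^ Suc s" by (metis power_add)
        then have "mc p (piz ^ (p - 1) * piz ^ Suc s) ([:int p:] * y) 0" using a by simp
        then have "mc p (piz ^ (p - 1) * piz ^ Suc s) (piz ^ (p - 1) * (cc * y)) 0"
          using mc_congr0[OF _ p_pi_mult] by blast
        then have "mc p (piz ^ Suc s) (cc * y) 0" by (rule pi_cancel)
        then show False using pi_unit_cancel cc_unit yns by blast
      qed
      have y2: "mc p (piz ^ (2 * s)) (y ^ 2) 0"
        using mc_mult0[OF ys ys] by (simp add: power2_eq_square mult_2 power_add)
      have B: "mc p (piz ^ (s + p)) ([:int p:] * y^2 * W) 0"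
      proof -
        have "mc p (piz ^ (p - 1) * piz ^ (2 * s)) ([:int p:] * y^2) 0" by (rule mc_mult0[OF p_div y2])
        then have "mc p (piz ^ (p - 1) * piz ^ (2 * s)) ([:int p:] * y^2 * W) 0" by (rule mc_times)
        then have "mc p (piz ^ (p - 1 + 2 * s)) ([:int p:] * y^2 * W) 0" by (simp only: power_add)
        then show ?thesis using s(1) by (intro pi_pow_mono[of "s + p" "p - 1 + 2 * s"]) auto
      qed
      have C: "mc p (piz ^ (s + p)) (y ^ p) 0"
      proof -
        have "mc p ((piz ^ s) ^ p) (y ^ p) 0" by (rule mc_pow0[OF ys])
        moreover have "s + p \<le> s * p"
        proof -
          have "s * p = s * (p - 1) + s" using p_ge3 by (simp add: algebra_simps)
          moreover have "s * (p - 1) \<ge> 2 * (p - 1)" using s(1) by simp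
          ultimately show ?thesis using p_ge3 by linarith
        qed
        ultimately show ?thesis by (intro pi_pow_mono[of "s + p" "s * p"]) (auto simp: power_mult)
      qed
      have BC: "mc p (piz ^ (s + p)) ([:int p:] * y^2 * W + y ^ p) 0"
        using mc_add[OF B C] by simp
      have "ex (s + (p - 1)) (w ^ n - 1)"
        unfolding ex_def e
      proof
        have "mc p (piz ^ (s + (p - 1))) ([:int p:] * y^2 * W + y ^ p) 0"
          using pi_pow_mono[OF _ BC] by simp
        then show "mc p (piz ^ (s + (p - 1))) ([:int p:] * y + ([:int p:] * y\<^sup>2 * W + y ^ p)) 0"
          using mc_add[OF A1] by fastforce
        show "\<not> mc p (piz ^ Suc (s + (p - 1))) ([:int p:] * y + ([:int p:] * y\<^sup>2 * W + y ^ p)) 0"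
        proof
          assume "mc p (piz ^ Suc (s + (p - 1))) ([:int p:] * y + ([:int p:] * y\<^sup>2 * W + y ^ p)) 0"
          then have "mc p (piz ^ (s + p)) ([:int p:] * y + ([:int p:] * y\<^sup>2 * W + y ^ p)) 0"
            using p_ge3 by (metis Suc_pred' add_Suc_right p_gt0)
          from mc_diff[OF this BC] A2 show False by simp
        qed
      qed
      then show ?thesis using s(1) by (intro exI[of _ "s + (p - 1)"]) auto
    qed
  qed
  obtain s where "ex s (w ^ N - 1)" using claim[OF N] by blast
  moreover have "mc p 0 (w ^ N - 1) 0" using wN mc_iff_0 by blast
  ultimately show False unfolding ex_def using mc_0_imp by blast
qed

end

context cyc begin

definition sg :: "nat \<Rightarrow> int poly \<Rightarrow> int poly" where
  "sg j f = pcompose f (monom 1 j)"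

lemma ev_sg: "ev z (sg j f) = ev (z ^ j) f"
  unfolding sg_def by (simp add: ev_pcompose)
lemma sg_add: "sg j (f + g) = sg j f + sg j g" unfolding sg_def by (simp add: pcompose_add)
lemma sg_diff: "sg j (f - g) = sg j f - sg j g" unfolding sg_def by (simp add: pcompose_diff)
lemma sg_mult: "sg j (f * g) = sg j f * sg j g" unfolding sg_def by (simp add: pcompose_mult)
lemma sg_power: "sg j (f ^ n) = sg j f ^ n" by (induction n) (auto simp: sg_def pcompose_1 pcompose_mult)
lemma sg_const[simp]: "sg j [:a:] = [:a:]" unfolding sg_def by simp
lemma sg_1[simp]: "sg j 1 = 1" unfolding sg_def by (simp add: pcompose_1)
lemma sg_0[simp]: "sg j 0 = 0" unfolding sg_def by simp
lemma conjz_sg: "conjz p f = sg (p - 1) f" unfolding conjz_def sg_def by simp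

lemma nd_mult: "\<not> p dvd j \<Longrightarrow> \<not> p dvd k \<Longrightarrow> \<not> p dvd (k * j)"
  using pr by (simp add: prime_dvd_mult_iff)

lemma nd_k: "0 < k \<Longrightarrow> k < p \<Longrightarrow> \<not> p dvd k"
  by (auto dest: dvd_imp_le)

lemma nd_pm1: "\<not> p dvd (p - 1)"
  using p_ge3 by (intro nd_k) auto

lemma sg_cyclo: "\<not> p dvd j \<Longrightarrow> mc p 0 (sg j Phi) 0"
proof (rule ev_mc0)
  fix k :: nat assume "\<not> p dvd j" "0 < k" "k < p"
  then have "\<not> p dvd (k * j)" using nd_mult nd_k by blast
  then show "ev (ze ^ k) (sg j Phi) = ev (ze ^ k) 0" by (simp add: ev_sg ev_cyclo flip: power_mult)
qed

lemma sg_piz: "sg j piz = piz * (\<Sum>i<j. XX ^ i)"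
proof -
  have "sg j piz = 1 - XX ^ j" unfolding sg_def piz_alt by (simp add: pcompose_diff pcompose_1 monom_X pcompose_pCons)
  also have "\<dots> = piz * (\<Sum>i<j. XX ^ i)" unfolding piz_alt using power_diff_1_eq[of XX j]
    by (simp add: algebra_simps)
  finally show ?thesis .
qed

lemma sg_mc: "\<not> p dvd j \<Longrightarrow> mc p d x y \<Longrightarrow> mc p (sg j d) (sg j x) (sg j y)"
proof -
  assume j: "\<not> p dvd j" and "mc p d x y"
  then obtain c q where e: "x - y = d * c + q * Phi" unfolding mc_def by blast
  obtain q' where q': "sg j Phi = q' * Phi" using sg_cyclo[OF j] unfolding mc_def by auto
  have "sg j x - sg j y = sg j d * sg j c + (sg j q * q') * Phi"
    using arg_cong[OF e, of "sg j"] q' by (simp add: sg_diff sg_add sg_mult mult.assoc)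
  then show ?thesis unfolding mc_def by blast
qed

lemma sg_mc0: "\<not> p dvd j \<Longrightarrow> mc p 0 x y \<Longrightarrow> mc p 0 (sg j x) (sg j y)"
  using sg_mc[of j 0] by simp

lemma sg_mc_pi: "\<not> p dvd j \<Longrightarrow> mc p (piz ^ k) x y \<Longrightarrow> mc p (piz ^ k) (sg j x) (sg j y)"
  using sg_mc[of j "piz ^ k" x y] by (auto simp: sg_power sg_piz power_mult_distrib intro: mc_mono)

lemma p_cancel0: "mc p 0 ([:int p:] * z) 0 \<Longrightarrow> mc p 0 z 0"
proof -
  assume h: "mc p 0 ([:int p:] * z) 0"
  show ?thesis
  proof (rule ev_mc0)
    fix k :: nat assume "0 < k" "k < p"
    then have "ev (ze ^ k) ([:int p:] * z) = 0" using mc0_iff_ev h by fastforce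
    then show "ev (ze ^ k) z = ev (ze ^ k) 0" using p_gt0 by simp
  qed
qed

lemma real_pi2:
  assumes real: "mc p 0 (conjz p t) t" and d: "mc p piz t 0"
  shows "mc p (piz ^ 2) t 0"
proof -
  obtain z q where tz: "t = piz * z + q * Phi" using d unfolding mc_def by auto
  have cp: "mc p 0 (conjz p piz) (- (XX ^ (p - 1)) * piz)"
  proof (rule ev_mc0)
    fix k :: nat assume "0 < k" "k < p"
    have "(ze ^ k) ^ (p - 1) * ze ^ k = (ze ^ k) ^ p" by (metis power_Suc2 Suc_pred' p_gt0)
    also have "\<dots> = 1" by (metis power_mult mult.commute ze_p power_one)
    finally have "(ze ^ k) ^ (p - 1) * ze ^ k = 1" .
    then show "ev (ze ^ k) (conjz p piz) = ev (ze ^ k) (- (XX ^ (p - 1)) * piz)"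
      by (simp add: conjz_sg ev_sg piz_def algebra_simps)
  qed
  have "mc p 0 t (piz * z)" using tz unfolding mc_def by auto
  then have "mc p 0 (conjz p t) (conjz p piz * conjz p z)"
    using sg_mc0[OF nd_pm1, of t "piz * z"] by (simp add: conjz_sg sg_mult)
  then have "mc p 0 (conjz p t) (- (XX ^ (p - 1)) * piz * conjz p z)"
    using mc_mult[OF cp mc_refl] mc_trans by blast
  then have "mc p 0 (piz * z) (- (XX ^ (p - 1)) * piz * conjz p z)"
    using real \<open>mc p 0 t (piz * z)\<close> mc_sym mc_trans by blast
  then have "mc p 0 (piz * z - (- (XX ^ (p - 1)) * piz * conjz p z)) 0"
    using mc_iff_0 by blast
  moreover have "piz * z - (- (XX ^ (p - 1)) * piz * conjz p z) = piz * (z + XX ^ (p - 1) * conjz p z)"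
    by (simp add: algebra_simps)
  ultimately have "mc p 0 (piz * (z + XX ^ (p - 1) * conjz p z)) 0" by simp
  then have "mc p 0 (z + XX ^ (p - 1) * conjz p z) 0" using pi_cancel1[of 0] by simp
  then have "mc p piz (z + XX ^ (p - 1) * conjz p z) 0" by (rule mc_0_imp)
  then have "int p dvd 2 * poly z 1" unfolding mc_pi_iff by (simp add: conjz_def poly_pcompose poly_monom)
  then have "int p dvd poly z 1" using pr od by (metis prime_dvd_mult_iff prime_nat_int_transfer
        dvd_antisym even_numeral int_dvd_int_iff nat_dvd_1_iff_1 of_nat_numeral prime_nat_iff
        numeral_eq_one_iff semiring_norm(85) two_is_prime_nat primes_dvd_imp_eq)
  then have "mc p piz z 0" unfolding mc_pi_iff .
  moreover have "mc p piz piz 0" using mc_multiple[of p piz 1] by simp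
  ultimately have "mc p (piz * piz) (piz * z) 0" using mc_mult0 by blast
  moreover have "mc p 0 (piz * z) t"
  proof -
    have "piz * z - t = 0 * 0 + (- q) * Phi" using tz by simp
    then show ?thesis unfolding mc_def by blast
  qed
  ultimately show ?thesis using mc_congr0 by (simp add: power2_eq_square)
qed

end

context cyc begin

lemma fermat_nat_pow: "[int n ^ p = int n] (mod int p)"
proof (induction n)
  case 0 then show ?case using p_gt0 by (simp add: zero_power)
next
  case (Suc n)
  obtain W :: int where W: "(1 + int n) ^ p = 1 + of_nat p * int n + of_nat p * (int n)^2 * W + int n ^ p"
    using binom_p[OF pr p_ge3] by blast
  have "[(1 + int n) ^ p = 1 + int n ^ p] (mod int p)"
    unfolding W by (simp add: cong_iff_dvd_diff)
  also have "[1 + int n ^ p = 1 + int n] (mod int p)" using Suc.IH by (intro cong_add) auto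
  finally show ?case by (simp add: add.commute)
qed

lemma fermat_int: "\<not> int p dvd e \<Longrightarrow> [e ^ (p - 1) = 1] (mod int p)"
proof -
  assume nd: "\<not> int p dvd e"
  define n where "n = nat (e mod int p)"
  have en: "[e = int n] (mod int p)" unfolding n_def using p_gt0 by (simp add: cong_def)
  have "[e ^ p = e] (mod int p)"
    using cong_trans[OF cong_trans[OF cong_pow[OF en] fermat_nat_pow] cong_sym[OF en]] .
  then have "[e * e ^ (p - 1) = e * 1] (mod int p)" by (metis power_Suc Suc_pred' p_gt0 mult_1_right)
  moreover have "coprime e (int p)" using nd pr
    by (metis coprime_commute prime_imp_coprime prime_nat_int_transfer)
  ultimately show ?thesis using cong_mult_lcancel by blast
qed

lemma sg_smult[simp]: "sg j (smult a f) = smult a (sg j f)" unfolding sg_def by (simp add: pcompose_smult)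


lemma u_real:
  assumes uv: "mc p 0 (u * v) 1" and ua: "mc p (piz ^ 2) u [:a:]"
  shows "mc p 0 (conjz p u) u"
proof -
  define w where "w = u * conjz p v"
  obtain N where N: "N > 0" "mc p 0 (w ^ N) 1" using kummer_finite[OF uv] unfolding w_def by blast
  have "mc p (piz ^ 2) (u * v) ([:a:] * v)" using mc_mult[OF ua mc_refl] .
  moreover have "mc p (piz ^ 2) (u * v) 1" using mc_0_imp[OF uv] .
  ultimately have av: "mc p (piz ^ 2) ([:a:] * v) 1" using mc_sym mc_trans by blast
  have "mc p (piz ^ 2) ([:a:] * conjz p v) 1"
    using sg_mc_pi[OF nd_pm1 av] by (simp add: conjz_sg sg_mult)
  moreover have "mc p (piz ^ 2) w ([:a:] * conjz p v)" unfolding w_def using mc_mult[OF ua mc_refl] .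
  ultimately have "mc p (piz ^ 2) w 1" using mc_trans by blast
  then have w1: "mc p 0 w 1" using root_one N by blast
  have c1: "mc p 0 (conjz p u * conjz p v) 1"
    using sg_mc0[OF nd_pm1 uv] by (simp add: conjz_sg sg_mult)
  have e: "conjz p u * w = u * (conjz p u * conjz p v)" unfolding w_def by (simp add: ac_simps)
  have m1: "mc p 0 (u * (conjz p u * conjz p v)) u" using mc_mult_left[OF c1, of u] by simp
  have m2: "mc p 0 (conjz p u * w) (conjz p u)" using mc_mult_left[OF w1, of "conjz p u"] by simp
  have "mc p 0 (conjz p u) (u * (conjz p u * conjz p v))" using mc_sym[OF m2] unfolding e .
  from mc_trans[OF this m1] show ?thesis .
qed

lemma u_cong_e:
  assumes ua: "mc p (piz ^ 2) u [:a:]" and pa: "\<not> int p dvd a"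
    and nb: "mc p [:int p:] (normz p u) [:b:]" and real: "mc p 0 (conjz p u) u"
  shows "\<exists>c. mc p (piz ^ (p + 1)) u [:a + int p * c:]"
proof -
  have "mc p 0 (normz p u) (u ^ 2)" unfolding normz_def power2_eq_square using mc_mult_left[OF real] .
  then have "mc p [:int p:] (u ^ 2) [:b:]" using nb mc_0_imp mc_sym mc_trans by blast
  then have u2b: "mc p (piz ^ (p - 1)) (u ^ 2) [:b:]" using p_to_pi[of 1] by simp
  define x where "x = u - [:a:]"
  have x2: "mc p (piz ^ 2) x 0" using ua mc_iff_0 unfolding x_def by blast
  have "mc p (piz ^ 2) (u ^ 2) ([:a:] ^ 2)" using mc_power[OF ua] .
  then have "mc p (piz ^ 2) (u ^ 2) [:a ^ 2:]" by (simp add: poly_const_pow)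
  moreover have "mc p (piz ^ 2) (u ^ 2) [:b:]" using pi_pow_mono[OF _ u2b] p_ge3 by simp
  ultimately have "mc p (piz ^ 2) [:a ^ 2:] [:b:]" using mc_sym mc_trans by blast
  then have "mc p (piz ^ 2) ([:a ^ 2:] - [:b:]) 0" using mc_iff_0 by blast
  then have "mc p (piz ^ 2) [:a ^ 2 - b:] 0" by simp
  then have "mc p piz [:a ^ 2 - b:] 0" using pi_pow_mono[of 1 2] by simp
  then obtain m where m: "a ^ 2 - b = int p * m" using mc_pi_int by (auto elim: dvdE)
  have "mc p [:int p:] [:a ^ 2 - b:] 0" using m mc_multiple[of p "[:int p:]" "[:m:]"] by (simp add: mult.commute)
  then have ab: "mc p (piz ^ (p - 1)) [:a ^ 2 - b:] 0" using p_to_pi[of 1] by simp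
  have ue: "u = [:a:] + x" unfolding x_def by simp
  have e1: "[:a ^ 2 - b:] = [:a:] * [:a:] - [:b:]" by (simp add: power2_eq_square)
  have e2: "[:2 * a:] = [:a:] + [:a:]" by simp
  have "u ^ 2 - [:b:] = [:a ^ 2 - b:] + x * ([:2 * a:] + x)" unfolding ue e1 e2
    by algebra
  then have "mc p (piz ^ (p - 1)) ([:a ^ 2 - b:] + x * ([:2 * a:] + x)) 0" using u2b mc_iff_0 by metis
  from mc_diff[OF this ab] have "mc p (piz ^ (p - 1)) (([:2 * a:] + x) * x) 0" by (simp add: ac_simps)
  moreover have "\<not> mc p piz ([:2 * a:] + x) 0"
  proof
    assume "mc p piz ([:2 * a:] + x) 0"
    then have d1: "int p dvd 2 * a + poly x 1" unfolding mc_pi_iff by simp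
    have "mc p piz x 0" using pi_pow_mono[of 1 2] x2 by simp
    then have "int p dvd poly x 1" unfolding mc_pi_iff .
    with d1 have "int p dvd 2 * a" using dvd_add_left_iff by blast
    moreover have "prime (int p)" using pr by simp
    ultimately have "int p dvd 2 \<or> int p dvd a" by (simp add: prime_dvd_mult_iff)
    moreover have "\<not> int p dvd 2"
    proof
      assume "int p dvd 2"
      then have "int p \<le> 2" by (rule zdvd_imp_le) simp
      then show False using p_ge3 by simp
    qed
    ultimately show False using pa by blast
  qed
  ultimately have xp: "mc p (piz ^ (p - 1)) x 0" using pi_unit_cancel by blast
  have xreal: "mc p 0 (conjz p x) x" unfolding x_def using mc_diff[OF real mc_refl, of "[:a:]"]
    by (simp add: conjz_sg sg_diff)
  have "mc p [:int p:] x 0" using pi_to_p[of 1] xp by simp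
  then obtain y q where y: "x = [:int p:] * y + q * Phi" unfolding mc_def by auto
  have xy: "mc p 0 x ([:int p:] * y)" unfolding mc_def using y by auto
  have "mc p 0 (conjz p x) ([:int p:] * conjz p y)"
    using sg_mc0[OF nd_pm1 xy] by (simp add: conjz_sg sg_mult)
  then have "mc p 0 ([:int p:] * conjz p y) ([:int p:] * y)" using xreal xy mc_sym mc_trans by blast
  then have "mc p 0 ([:int p:] * (conjz p y - y)) 0" using mc_iff_0 by (simp add: algebra_simps)
  then have yreal: "mc p 0 (conjz p y) y" using p_cancel0 mc_iff_0 by blast
  define c where "c = poly y 1"
  define t where "t = y - [:c:]"
  have t1: "mc p piz t 0" unfolding t_def c_def using mc_pi_const mc_iff_0 by blast
  have treal: "mc p 0 (conjz p t) t" unfolding t_def using mc_diff[OF yreal mc_refl, of "[:c:]"]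
    by (simp add: conjz_sg sg_diff)
  have t2: "mc p (piz ^ 2) t 0" using real_pi2[OF treal t1] .
  have "mc p (piz ^ (p - 1) * piz ^ 2) ([:int p:] * t) 0" using mc_mult0[OF p_div t2] .
  moreover have "p - 1 + 2 = p + 1" using p_ge3 by simp
  ultimately have pt: "mc p (piz ^ (p + 1)) ([:int p:] * t) 0" by (metis power_add)
  have "u - [:a + int p * c:] = x - [:int p * c:]" unfolding x_def by simp
  also have "mc p 0 (x - [:int p * c:]) ([:int p:] * y - [:int p * c:])" using mc_diff[OF xy mc_refl] .
  then have "mc p 0 (x - [:int p * c:]) ([:int p:] * t)" unfolding t_def by (simp add: algebra_simps)
  then have "mc p (piz ^ (p + 1)) (x - [:int p * c:]) 0" using pt mc_congr0 mc_sym by blast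
  ultimately have "mc p (piz ^ (p + 1)) (u - [:a + int p * c:]) 0" by simp
  then show ?thesis using mc_iff_0 by blast
qed

end

context cyc begin

lemma mult_mod_bij: "0 < k \<Longrightarrow> k < p \<Longrightarrow> bij_betw (\<lambda>j. (k * j) mod p) {1..<p} {1..<p}"
proof -
  assume k: "0 < k" "k < p"
  let ?h = "\<lambda>j. (k * j) mod p"
  have sub: "?h ` {1..<p} \<subseteq> {1..<p}"
  proof
    fix x assume "x \<in> ?h ` {1..<p}"
    then obtain j where j: "j \<in> {1..<p}" "x = (k * j) mod p" by auto
    have "\<not> p dvd (k * j)" using nd_mult[OF nd_k nd_k] j k by auto
    then have "x \<noteq> 0" using j by (simp add: dvd_eq_mod_eq_0)
    moreover have "x < p" using j p_gt0 by simp
    ultimately show "x \<in> {1..<p}" by auto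
  qed
  have inj: "inj_on ?h {1..<p}"
  proof (rule inj_onI)
    fix i j assume ij: "i \<in> {1..<p}" "j \<in> {1..<p}" "?h i = ?h j"
    then have "[k * i = k * j] (mod p)" by (simp add: cong_def)
    moreover have "coprime k p" using pr nd_k[OF k] by (metis coprime_commute prime_imp_coprime)
    ultimately have "[i = j] (mod p)" using cong_mult_lcancel_nat by blast
    then show "i = j" using ij by (simp add: cong_def)
  qed
  have "?h ` {1..<p} = {1..<p}" using endo_inj_surj[OF _ sub inj] by simp
  then show ?thesis using inj unfolding bij_betw_def by simp
qed

lemma prod_reindex_k:
  assumes "0 < k" "k < p"
  shows "(\<Prod>j\<in>{1..<p}. g (ze ^ (k * j))) = (\<Prod>j\<in>{1..<p}. g (ze ^ j))"
proof -
  have "(\<Prod>j\<in>{1..<p}. g (ze ^ (k * j))) = (\<Prod>j\<in>{1..<p}. g (ze ^ ((k * j) mod p)))"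
    using ze_pow_mod by simp
  also have "\<dots> = (\<Prod>j\<in>{1..<p}. g (ze ^ j))"
    using prod.reindex_bij_betw[OF mult_mod_bij[OF assms], of "\<lambda>j. g (ze ^ j)"] by simp
  finally show ?thesis .
qed

lemma const_of_ev:
  assumes "\<And>k. 0 < k \<Longrightarrow> k < p \<Longrightarrow> ev (ze ^ k) f = c"
  shows "\<exists>n. mc p 0 f [:n:] \<and> c = of_int n"
proof -
  obtain q r where qr: "f = q * Phi + r" "degree r < p - 1" using reduce by blast
  define R where "R = map_poly (of_int :: int \<Rightarrow> complex) r - [:c:]"
  have roots: "poly R (ze ^ k) = 0" if "0 < k" "k < p" for k
  proof -
    have "ev (ze ^ k) r = c" using assms[OF that] qr(1) ev_cyclo[OF nd_k[OF that]] by simp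
    then show ?thesis unfolding R_def by (simp add: ev_def)
  qed
  have dR: "degree R < p - 1"
  proof -
    have "degree R \<le> max (degree (map_poly (of_int :: int \<Rightarrow> complex) r)) (degree [:c:])"
      unfolding R_def by (rule degree_diff_le_max)
    then show ?thesis using qr(2) p_ge3 by (simp add: degree_map_poly)
  qed
  have "R = 0"
  proof (rule ccontr)
    assume R0: "R \<noteq> 0"
    have "(\<lambda>k. ze ^ k) ` {1..<p} \<subseteq> {x. poly R x = 0}" using roots by auto
    moreover have "card ((\<lambda>k. ze ^ k) ` {1..<p}) = p - 1"
      by (subst card_image) (auto simp: inj_on_def intro: ze_inj)
    ultimately have "p - 1 \<le> card {x. poly R x = 0}"
      by (metis card_mono poly_roots_finite R0)
    also have "\<dots> \<le> degree R" by (rule card_poly_roots_bound[OF R0])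
    finally show False using dR by simp
  qed
  then have mr: "map_poly (of_int :: int \<Rightarrow> complex) r = [:c:]" unfolding R_def by simp
  have "coeff r i = 0" if "i > 0" for i
  proof -
    have "coeff (map_poly (of_int :: int \<Rightarrow> complex) r) i = 0" using mr that by (simp add: coeff_pCons split: nat.splits)
    then show ?thesis by (simp add: coeff_map_poly)
  qed
  then have r: "r = [:coeff r 0:]" by (intro poly_eqI) (auto simp: coeff_pCons split: nat.splits)
  have "c = of_int (coeff r 0)" using arg_cong[OF mr, of "\<lambda>P. coeff P 0"] by (simp add: coeff_map_poly)
  moreover have "mc p 0 f [:coeff r 0:]"
  proof -
    have "f - [:coeff r 0:] = 0 * 0 + q * Phi" using qr(1) r by (metis add_diff_cancel_right' mult_zero_left add_0)
    then show ?thesis unfolding mc_def by blast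
  qed
  ultimately show ?thesis by blast
qed

lemma norm_e:
  assumes uv: "mc p 0 (u * v) 1" and ue: "mc p (piz ^ (p + 1)) u [:e:]" and pe: "\<not> int p dvd e"
  shows "[e ^ (p - 1) = 1] (mod (int p ^ 2))"
proof -
  define Pn where "Pn = (\<Prod>j\<in>{1..<p}. sg j u)"
  define Qn where "Qn = (\<Prod>j\<in>{1..<p}. sg j v)"
  have evP: "ev (ze ^ k) Pn = (\<Prod>j\<in>{1..<p}. ev (ze ^ j) u)" if "0 < k" "k < p" for k
  proof -
    have "ev (ze ^ k) Pn = (\<Prod>j\<in>{1..<p}. ev (ze ^ (k * j)) u)"
      unfolding Pn_def by (simp add: ev_prod ev_sg power_mult)
    then show ?thesis using prod_reindex_k[OF that, of "\<lambda>z. ev z u"] by simp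
  qed
  have evQ: "ev (ze ^ k) Qn = (\<Prod>j\<in>{1..<p}. ev (ze ^ j) v)" if "0 < k" "k < p" for k
  proof -
    have "ev (ze ^ k) Qn = (\<Prod>j\<in>{1..<p}. ev (ze ^ (k * j)) v)"
      unfolding Qn_def by (simp add: ev_prod ev_sg power_mult)
    then show ?thesis using prod_reindex_k[OF that, of "\<lambda>z. ev z v"] by simp
  qed
  obtain N1 where N1: "mc p 0 Pn [:N1:]" "(\<Prod>j\<in>{1..<p}. ev (ze ^ j) u) = of_int N1"
    using const_of_ev[OF evP] by blast
  obtain N2 where N2: "mc p 0 Qn [:N2:]" "(\<Prod>j\<in>{1..<p}. ev (ze ^ j) v) = of_int N2"
    using const_of_ev[OF evQ] by blast
  have "(\<Prod>j\<in>{1..<p}. ev (ze ^ j) u) * (\<Prod>j\<in>{1..<p}. ev (ze ^ j) v) = (\<Prod>j\<in>{1..<p}. 1)"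
    unfolding prod.distrib[symmetric] using ev_unit[OF uv] by (intro prod.cong) auto
  then have "of_int (N1 * N2) = (1 :: complex)" using N1(2) N2(2) by simp
  then have "N1 * N2 = 1" by (metis of_int_1 of_int_eq_iff)
  then have N1pm: "N1 = 1 \<or> N1 = -1" by (simp add: zmult_eq_1_iff) (metis zmult_eq_1_iff)
  have "mc p (piz ^ (p + 1)) Pn (\<Prod>j\<in>{1..<p}. [:e:])"
    unfolding Pn_def using sg_mc_pi[OF nd_k ue] by (intro mc_prod) (metis sg_const atLeastLessThan_iff less_le_trans zero_less_one le_less_trans)
  then have "mc p (piz ^ (p + 1)) Pn [:e ^ (p - 1):]" by (simp add: poly_const_pow)
  moreover have "mc p (piz ^ (p + 1)) Pn [:N1:]" using mc_0_imp[OF N1(1)] .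
  ultimately have "mc p (piz ^ (p + 1)) [:N1:] [:e ^ (p - 1):]" using mc_sym mc_trans by blast
  then have "mc p (piz ^ (p + 1)) ([:N1:] - [:e ^ (p - 1):]) 0" using mc_iff_0 by blast
  then have "mc p (piz ^ (p + 1)) [:N1 - e ^ (p - 1):] 0" by simp
  then have d2: "int p ^ 2 dvd N1 - e ^ (p - 1)" by (rule int_pi2)
  have f: "[e ^ (p - 1) = 1] (mod int p)" by (rule fermat_int[OF pe])
  have "int p dvd N1 - e ^ (p - 1)" using d2 by (metis dvd_power dvd_trans zero_less_numeral p_gt0 dvd_mult_left power2_eq_square)
  moreover have "int p dvd e ^ (p - 1) - 1" using f by (simp add: cong_iff_dvd_diff dvd_diff_commute)
  ultimately have "int p dvd N1 - 1" using dvd_add by fastforce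
  then have "N1 = 1"
  proof (cases "N1 = 1")
    case False
    then have "N1 = -1" using N1pm by simp
    with \<open>int p dvd N1 - 1\<close> have "int p dvd 2" by (metis dvd_minus_iff minus_diff_eq diff_minus_eq_add one_add_one uminus_add_conv_diff)
    then have "int p \<le> 2" by (rule zdvd_imp_le) simp
    then show ?thesis using p_ge3 by simp
  qed
  then show ?thesis using d2 by (simp add: cong_iff_dvd_diff dvd_diff_commute)
qed

end

primrec Yseq :: "(nat \<Rightarrow> int poly \<Rightarrow> int poly) \<Rightarrow> int poly \<Rightarrow> nat \<Rightarrow> int poly" where
  "Yseq f y0 0 = y0"
| "Yseq f y0 (Suc i) = f i (Yseq f y0 i)"

context cyc begin

lemma mc_div0: "mc p 0 x x' \<Longrightarrow> mc p d x' 0 \<Longrightarrow> mc p d x 0"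
  using mc_congr0 mc_sym by blast

lemma hensel_step:
  assumes uv: "mc p 0 (u * v) 1" and k: "k \<ge> p + 1" and y: "mc p (piz ^ k) (y ^ p) u"
  shows "\<exists>y'. mc p (piz ^ Suc k) (y' ^ p) u \<and> mc p (piz ^ (k - p + 1)) y' y"
proof -
  define s where "s = k - p + 1"
  have s2: "s \<ge> 2" using k unfolding s_def by simp
  have ks: "p - 1 + s = k" using k p_ge3 unfolding s_def by simp
  define d where "d = u - y ^ p"
  have "mc p (piz ^ k) d 0" using y mc_iff_0 mc_sym unfolding d_def by blast
  then obtain d' q where dd: "d = piz ^ k * d' + q * Phi" unfolding mc_def by auto
  have dd0: "mc p 0 d (piz ^ k * d')" using dd unfolding mc_def by auto
  define Gw where "Gw = piz * Wc - 1"
  define z where "z = piz ^ s * (Gw * v * d')"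
  have pz: "mc p 0 ([:int p:] * z) (piz ^ k * v * d')"
  proof -
    have "mc p 0 ([:int p:] * Gw) (piz ^ (p - 1))" using mc_sym[OF pi_p1] unfolding Gw_def .
    then have "mc p 0 ([:int p:] * Gw * (piz ^ s * v * d')) (piz ^ (p - 1) * (piz ^ s * v * d'))"
      by (rule mc_mult[OF _ mc_refl])
    moreover have "[:int p:] * z = [:int p:] * Gw * (piz ^ s * v * d')" unfolding z_def by (simp add: ac_simps)
    moreover have "piz ^ (p - 1) * (piz ^ s * v * d') = piz ^ k * v * d'"
      using ks by (metis power_add mult.assoc)
    ultimately show ?thesis by metis
  qed
  obtain W where W: "(1 + z) ^ p = 1 + of_nat p * z + of_nat p * z^2 * W + z ^ p"
    using binom_p[OF pr p_ge3] by blast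
  have op: "(of_nat p :: int poly) = [:int p:]" by (simp add: of_nat_poly)
  define y' where "y' = y * (1 + z)"
  define T1 where "T1 = y ^ p * ([:int p:] * z) - d"
  define T2 where "T2 = y ^ p * ([:int p:] * z^2 * W + z ^ p)"
  have E: "y' ^ p - u = T1 + T2"
    unfolding y'_def T1_def T2_def d_def power_mult_distrib W op by (simp add: algebra_simps)
  have zs: "mc p (piz ^ s) z 0" unfolding z_def by simp
  have T1d: "mc p (piz ^ Suc k) T1 0"
  proof -
    have "mc p 0 T1 (y ^ p * (piz ^ k * v * d') - piz ^ k * d')"
      unfolding T1_def by (rule mc_diff[OF mc_mult_left[OF pz] dd0])
    moreover have "y ^ p * (piz ^ k * v * d') - piz ^ k * d' = (y ^ p * v - 1) * (piz ^ k * d')"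
      by (simp add: algebra_simps)
    moreover have "mc p (piz ^ k * piz ^ k) ((y ^ p * v - 1) * (piz ^ k * d')) 0"
    proof (rule mc_mult0)
      have "mc p (piz ^ k) (y ^ p * v) (u * v)" by (rule mc_mult[OF y mc_refl])
      moreover have "mc p (piz ^ k) (u * v) 1" by (rule mc_0_imp[OF uv])
      ultimately show "mc p (piz ^ k) (y ^ p * v - 1) 0" using mc_trans mc_iff_0 by blast
      show "mc p (piz ^ k) (piz ^ k * d') 0" by simp
    qed
    then have "mc p (piz ^ Suc k) ((y ^ p * v - 1) * (piz ^ k * d')) 0"
      using pi_pow_mono[of "Suc k" "k + k"] k by (simp add: power_add)
    ultimately show ?thesis using mc_div0 by simp
  qed
  have T2d: "mc p (piz ^ Suc k) T2 0"
  proof -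
    have "mc p (piz ^ (p - 1) * (piz ^ s * piz ^ s)) ([:int p:] * (z * z)) 0"
      by (intro mc_mult0 p_div zs)
    then have "mc p (piz ^ (p - 1) * (piz ^ s * piz ^ s)) ([:int p:] * (z * z) * W) 0"
      by (rule mc_times)
    moreover have "piz ^ (p - 1) * (piz ^ s * piz ^ s) = piz ^ (p - 1 + s + s)" by (simp add: power_add)
    moreover have "[:int p:] * (z * z) * W = [:int p:] * z^2 * W" by (simp add: power2_eq_square)
    ultimately have a: "mc p (piz ^ (p - 1 + s + s)) ([:int p:] * z^2 * W) 0" by metis
    have b: "mc p (piz ^ (s * p)) (z ^ p) 0" using mc_pow0[OF zs, of p] by (simp add: power_mult)
    have "Suc k \<le> p - 1 + s + s" using ks s2 by simp
    moreover have "Suc k \<le> s * p"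
    proof -
      have "s * p = s + s * (p - 1)" using p_ge3 by (metis mult.commute mult_eq_if p_gt0 not_gr0 add.commute
            Suc_pred' mult_Suc_right)
      moreover have "s * (p - 1) \<ge> 2 * (p - 1)" using s2 by simp
      ultimately show ?thesis using ks p_ge3 by linarith
    qed
    ultimately have "mc p (piz ^ Suc k) ([:int p:] * z^2 * W + z ^ p) 0"
      using mc_add[OF pi_pow_mono[OF _ a] pi_pow_mono[OF _ b], of "Suc k"] by (simp only: add_0)
    then show ?thesis unfolding T2_def using mc_mult_left[of p _ _ 0 "y ^ p"] by simp
  qed
  have "mc p (piz ^ Suc k) (y' ^ p - u) 0" unfolding E using mc_add[OF T1d T2d] by simp
  then have c1: "mc p (piz ^ Suc k) (y' ^ p) u" using mc_iff_0 by blast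
  have "y' - y = y * z" unfolding y'_def by (simp add: algebra_simps)
  then have "mc p (piz ^ s) (y' - y) 0" using mc_mult_left[OF zs, of y] by simp
  then have c2: "mc p (piz ^ s) y' y" using mc_iff_0 by blast
  show ?thesis using c1 c2 unfolding s_def by blast
qed

end

context cyc begin

lemma hensel_all:
  assumes uv: "mc p 0 (u * v) 1" and ue: "mc p (piz ^ (p + 1)) u [:e:]"
    and e2: "[e ^ (p - 1) = 1] (mod (int p ^ 2))"
  shows "\<exists>Y. (\<forall>i. mc p (piz ^ (p + 1 + i)) (Y i ^ p) u) \<and> (\<forall>i j. i \<le> j \<longrightarrow> mc p (piz ^ (i + 2)) (Y j) (Y i))"
proof -
  define f where "f = (\<lambda>i y. SOME y'. mc p (piz ^ Suc (p + 1 + i)) (y' ^ p) u \<and> mc p (piz ^ (p + 1 + i - p + 1)) y' y)"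
  define Y where "Y = Yseq f [:e:]"
  have start: "mc p (piz ^ (p + 1)) ([:e:] ^ p) u"
  proof -
    have "int p ^ 2 dvd e * (e ^ (p - 1) - 1)" using e2 by (simp add: cong_iff_dvd_diff dvd_diff_commute)
    moreover have "e * (e ^ (p - 1) - 1) = e ^ p - e"
    proof -
      have "e ^ p = e * e ^ (p - 1)" using power_Suc[of e "p - 1"] p_gt0 by simp
      then show ?thesis by (simp add: algebra_simps)
    qed
    ultimately obtain m where m: "e ^ p - e = int p ^ 2 * m" by (auto elim: dvdE)
    have "mc p [:int p ^ 2:] ([:e:] ^ p - [:e:]) 0"
      using mc_multiple[of p "[:int p ^ 2:]" "[:m:]"] m by (simp add: poly_const_pow mult.commute)
    then have "mc p (piz ^ ((p - 1) * 2)) ([:e:] ^ p) [:e:]" using p_to_pi[of 2] mc_iff_0 by blast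
    then have "mc p (piz ^ (p + 1)) ([:e:] ^ p) [:e:]" using pi_pow_mono[of "p + 1" "(p - 1) * 2"] p_ge3 by simp
    then show ?thesis using ue mc_sym mc_trans by blast
  qed
  have inv: "mc p (piz ^ (p + 1 + i)) (Y i ^ p) u \<and> mc p (piz ^ (i + 2)) (Y (Suc i)) (Y i)" for i
  proof (induction i)
    case 0
    have ex: "\<exists>y'. mc p (piz ^ Suc (p + 1 + 0)) (y' ^ p) u \<and> mc p (piz ^ (p + 1 + 0 - p + 1)) y' [:e:]"
      using hensel_step[OF uv _ start] by simp
    have "mc p (piz ^ Suc (p + 1)) (Y 1 ^ p) u \<and> mc p (piz ^ 2) (Y 1) (Y 0)"
      using someI_ex[OF ex] unfolding Y_def f_def by (simp add: power2_eq_square)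
    then show ?case using start unfolding Y_def by (simp add: power2_eq_square)
  next
    case (Suc i)
    then have a: "mc p (piz ^ (p + 1 + Suc i)) (Y (Suc i) ^ p) u"
      using someI_ex[OF hensel_step[OF uv _ conjunct1[OF Suc.IH]]] unfolding Y_def f_def by simp
    have ex: "\<exists>y'. mc p (piz ^ Suc (p + 1 + Suc i)) (y' ^ p) u \<and> mc p (piz ^ (p + 1 + Suc i - p + 1)) y' (Y (Suc i))"
      using hensel_step[OF uv _ a] by simp
    have "mc p (piz ^ Suc (p + 1 + Suc i)) (Y (Suc (Suc i)) ^ p) u \<and> mc p (piz ^ (Suc i + 2)) (Y (Suc (Suc i))) (Y (Suc i))"
      using someI_ex[OF ex] unfolding Y_def f_def by simp
    then show ?case using a by simp
  qed
  have mono: "mc p (piz ^ (i + 2)) (Y j) (Y i)" if "i \<le> j" for i j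
    using that
  proof (induction j rule: dec_induct)
    case base then show ?case by simp
  next
    case (step j)
    have "mc p (piz ^ (i + 2)) (Y (Suc j)) (Y j)"
      using pi_pow_mono[of "i + 2" "j + 2"] step(1) conjunct2[OF inv[of j]] by simp
    then show ?case using step(3) mc_trans by blast
  qed
  show ?thesis using inv mono by blast
qed

lemma final:
  assumes uv: "mc p 0 (u * v) 1" and ue: "mc p (piz ^ (p + 1)) u [:e:]"
    and e2: "[e ^ (p - 1) = 1] (mod (int p ^ 2))"
  shows "o_pth_power_unit p (\<lambda>n. u)"
proof -
  obtain Y where Y1: "\<And>i. mc p (piz ^ (p + 1 + i)) (Y i ^ p) u"
    and Y2: "\<And>i j. i \<le> j \<Longrightarrow> mc p (piz ^ (i + 2)) (Y j) (Y i)"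
    using hensel_all[OF uv ue e2] by blast
  define K where "K = (\<lambda>n. (p - 1) * (n + 2) - (p + 1))"
  have K1: "p + 1 + K n = (p - 1) * (n + 2)" for n
  proof -
    have "(p - 1) * (n + 2) \<ge> (p - 1) * 2" by simp
    moreover have "(p - 1) * 2 \<ge> p + 1" using p_ge3 by simp
    ultimately show ?thesis unfolding K_def by simp
  qed
  have K2: "K n + 2 = (p - 1) * (n + 1)" for n
  proof -
    have "n + 2 = Suc (n + 1)" by simp
    then have "(p - 1) * (n + 2) = (p - 1) * (n + 1) + (p - 1)" by (simp only: mult_Suc_right add.commute)
    then show ?thesis using K1[of n] p_ge3 by linarith
  qed
  have Kmono: "K n \<le> K (Suc n)" for n unfolding K_def by (intro diff_le_mono mult_le_mono) auto
  define y where "y = (\<lambda>n. Y (K n))"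
  have ypow: "mc p [:int p ^ n:] (y n ^ p) u" for n
  proof -
    have "mc p (piz ^ ((p - 1) * (n + 2))) (y n ^ p) u" using Y1[of "K n"] unfolding K1 y_def .
    then have "mc p (piz ^ ((p - 1) * n)) (y n ^ p) u" by (rule pi_pow_mono[rotated]) simp
    then show ?thesis by (rule pi_to_p)
  qed
  have ystep: "mc p [:int p ^ n:] (y (Suc n)) (y n)" for n
  proof -
    have "mc p (piz ^ ((p - 1) * (n + 1))) (y (Suc n)) (y n)"
      using Y2[OF Kmono[of n]] unfolding K2 y_def .
    then have "mc p (piz ^ ((p - 1) * n)) (y (Suc n)) (y n)" by (rule pi_pow_mono[rotated]) simp
    then show ?thesis by (rule pi_to_p)
  qed
  define z where "z = (\<lambda>n. y n ^ (p - 1) * v)"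
  have yo: "o_elem p y" unfolding o_elem_def zcong_mc using ystep by simp
  have zo: "o_elem p z" unfolding o_elem_def zcong_mc z_def
  proof
    fix n show "mc p [:int p ^ n:] (y (Suc n) ^ (p - 1) * v) (y n ^ (p - 1) * v)"
      by (rule mc_mult[OF mc_power[OF ystep] mc_refl])
  qed
  have yz: "o_eq p (\<lambda>n. y n * z n) (\<lambda>n. 1)" unfolding o_eq_def zcong_mc
  proof
    fix n
    have "y n ^ p = y n * y n ^ (p - 1)" using power_Suc[of "y n" "p - 1"] p_gt0 by simp
    then have "y n * z n = y n ^ p * v" unfolding z_def by (simp add: mult.assoc)
    moreover have "mc p [:int p ^ n:] (y n ^ p * v) (u * v)" by (rule mc_mult[OF ypow mc_refl])
    moreover have "mc p [:int p ^ n:] (u * v) 1" by (rule mc_0_imp[OF uv])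
    ultimately show "mc p [:int p ^ n:] (y n * z n) 1" using mc_trans by simp
  qed
  have "o_unit p y" unfolding o_unit_def using yo zo yz by blast
  moreover have "o_eq p (\<lambda>n. y n ^ p) (\<lambda>n. u)" unfolding o_eq_def zcong_mc using ypow by simp
  ultimately show ?thesis unfolding o_pth_power_unit_def by blast
qed

end

theorem proposition6:
  fixes p :: nat and u :: "int poly"
  assumes "prime p" and "odd p"
    and "zunit p u"
    and "\<exists>a. Zp_unit p a \<and> o_cong p (piz ^ 2) (\<lambda>n. u) (\<lambda>n. [:a n:])"
    and "\<exists>b. Zp_unit p b \<and> o_cong p [:int p:] (\<lambda>n. normz p u) (\<lambda>n. [:b n:])"
  shows "o_pth_power_unit p (\<lambda>n. u)"
proof -
  interpret cyc p using assms(1,2) by unfold_locales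
  obtain v where uv: "mc p 0 (u * v) 1" using assms(3) unfolding zunit_def zeq_mc by blast
  obtain a where aU: "Zp_unit p a" and aC: "o_cong p (piz ^ 2) (\<lambda>n. u) (\<lambda>n. [:a n:])" using assms(4) by blast
  obtain za where za: "o_eq p (\<lambda>n. u - [:a n:]) (\<lambda>n. piz ^ 2 * za n)" using aC unfolding o_cong_def by blast
  have "mc p [:int p ^ 1:] (u - [:a 1:]) (piz ^ 2 * za 1)" using za unfolding o_eq_def zcong_mc by blast
  then have "mc p (piz ^ ((p - 1) * 1)) (u - [:a 1:]) (piz ^ 2 * za 1)" by (rule p_to_pi)
  then have "mc p (piz ^ 2) (u - [:a 1:]) (piz ^ 2 * za 1)" using pi_pow_mono[of 2 "p - 1"] p_ge3 by simp
  then have "mc p (piz ^ 2) (u - [:a 1:]) 0" using mc_trans mc_multiple by blast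
  then have ua: "mc p (piz ^ 2) u [:a 1:]" using mc_iff_0 by blast
  obtain a' where "\<forall>n. [a n * a' n = 1] (mod (int p ^ n))" using aU unfolding Zp_unit_def by blast
  then have "[a 1 * a' 1 = 1] (mod int p)" by (metis power_one_right)
  then have pa: "\<not> int p dvd a 1"
  proof (intro notI)
    assume c: "[a 1 * a' 1 = 1] (mod int p)" and d: "int p dvd a 1"
    then have "int p dvd a 1 * a' 1" by simp
    then have "int p dvd 1" using c by (metis cong_dvd_iff)
    then show False using p_ge3 by simp
  qed
  obtain b where bC: "o_cong p [:int p:] (\<lambda>n. normz p u) (\<lambda>n. [:b n:])" using assms(5) by blast
  obtain zb where zb: "o_eq p (\<lambda>n. normz p u - [:b n:]) (\<lambda>n. [:int p:] * zb n)" using bC unfolding o_cong_def by blast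
  have "mc p [:int p ^ 1:] (normz p u - [:b 1:]) ([:int p:] * zb 1)" using zb unfolding o_eq_def zcong_mc by blast
  then have "mc p [:int p:] (normz p u - [:b 1:]) ([:int p:] * zb 1)" by (simp only: power_one_right)
  then have "mc p [:int p:] (normz p u - [:b 1:]) 0" using mc_trans mc_multiple by blast
  then have nb: "mc p [:int p:] (normz p u) [:b 1:]" using mc_iff_0 by blast
  have real: "mc p 0 (conjz p u) u" by (rule u_real[OF uv ua])
  obtain c where ue: "mc p (piz ^ (p + 1)) u [:a 1 + int p * c:]" using u_cong_e[OF ua pa nb real] by blast
  have pe: "\<not> int p dvd (a 1 + int p * c)" using pa by (simp add: dvd_add_left_iff)
  have e2: "[(a 1 + int p * c) ^ (p - 1) = 1] (mod (int p ^ 2))" by (rule norm_e[OF uv ue pe])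
  show ?thesis by (rule final[OF uv ue e2])
qed


end
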